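(* Let $\phi\colon\mathbb{R}\to\mathbb{R}$ be an increasing homeomorphism with $\phi(0)=0$, let $f\colon\mathbb{R}\to\mathbb{R}$ be continuous, and let $h\colon[0,T]\times\mathbb{R}\to\mathbb{R}$ be a Carathéodory function satisfying: $(A_0)$ for all $t_0\in[0,T]$, $u_0\in\mathbb{R}$ and $\varepsilon>0$ there exists $\delta>0$ such that if $|t-t_0|<\delta$ and $|u-u_0|<\delta$ then $|h(t,u)-h(t,u_0)|<\varepsilon$ for a.e. $t$. Let $b>0$ and $\beta\in\mathfrak{D}$ be such that $$(\phi(\beta'(t)))'+f(\beta(t))\beta'(t)+h(t,\beta(t))\le -b\quad\text{for a.e. }t\in[0,T].$$ Then $\beta$ is a strict upper solution to $(\phi(u'))'+f(u)u'+h(t,u)=0$.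
   Context: $\mathcal{C}^1_T=\{u\in\mathcal{C}^1([0,T]):u(0)=u(T),\,u'(0)=u'(T)\}$ and $\mathfrak{D}=\{u\in\mathcal{C}^1_T:\phi(u')\text{ is absolutely continuous}\}$. A $T$-periodic solution of $(\phi(u'))'+f(u)u'+h(t,u)=0$ is a $u\in\mathfrak{D}$ satisfying the equation a.e. A function $\beta\in\mathfrak{D}$ is a strict upper solution of this equation if $(\phi(\beta'))'+f(\beta)\beta'+h(t,\beta)<0$ for a.e. $t\in[0,T]$ and, whenever $u$ is a $T$-periodic solution with $u(t)\le\beta(t)$ for all $t\in[0,T]$, then $u(t)<\beta(t)$ for all $t\in[0,T]$. A Carathéodory function is measurable in $t$, continuous in $u$, and for each $r>0$ bounded in absolute value on $[0,T]\times[-r,r]$ by an $L^1$ function of $t$. *)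

theory Defs
  imports "HOL-Analysis.Analysis"
begin

definition dT :: "real \<Rightarrow> (real \<Rightarrow> real) \<Rightarrow> real \<Rightarrow> real" where
  "dT T u t = (THE d. (u has_real_derivative d) (at t within {0..T}))"

definition abs_continuous_on :: "real \<Rightarrow> real \<Rightarrow> (real \<Rightarrow> real) \<Rightarrow> bool" where
  "abs_continuous_on lo hi g \<longleftrightarrow>
     (\<forall>\<epsilon>>0. \<exists>\<delta>>0. \<forall>(n::nat) (a::nat \<Rightarrow> real) (b::nat \<Rightarrow> real).
        (\<forall>i<n. lo \<le> a i \<and> a i \<le> b i \<and> b i \<le> hi) \<and>
        (\<forall>i<n. \<forall>j<n. i \<noteq> j \<longrightarrow> b i \<le> a j \<or> b j \<le> a i) \<and>
        (\<Sum>i<n. b i - a i) < \<delta>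
        \<longrightarrow> (\<Sum>i<n. \<bar>g (b i) - g (a i)\<bar>) < \<epsilon>)"

definition C1T :: "real \<Rightarrow> (real \<Rightarrow> real) \<Rightarrow> bool" where
  "C1T T u \<longleftrightarrow>
     (\<forall>t\<in>{0..T}. u differentiable (at t within {0..T})) \<and>
     continuous_on {0..T} (dT T u) \<and>
     u 0 = u T \<and> dT T u 0 = dT T u T"

definition DD :: "real \<Rightarrow> (real \<Rightarrow> real) \<Rightarrow> (real \<Rightarrow> real) \<Rightarrow> bool" where
  "DD T \<phi> u \<longleftrightarrow> C1T T u \<and> abs_continuous_on 0 T (\<lambda>s. \<phi> (dT T u s))"

definition Lop :: "real \<Rightarrow> (real \<Rightarrow> real) \<Rightarrow> (real \<Rightarrow> real) \<Rightarrow> (real \<Rightarrow> real \<Rightarrow> real)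
                    \<Rightarrow> (real \<Rightarrow> real) \<Rightarrow> real \<Rightarrow> real" where
  "Lop T \<phi> f h u t = dT T (\<lambda>s. \<phi> (dT T u s)) t + f (u t) * dT T u t + h t (u t)"

definition periodic_solution ::
  "real \<Rightarrow> (real \<Rightarrow> real) \<Rightarrow> (real \<Rightarrow> real) \<Rightarrow> (real \<Rightarrow> real \<Rightarrow> real) \<Rightarrow> (real \<Rightarrow> real) \<Rightarrow> bool" where
  "periodic_solution T \<phi> f h u \<longleftrightarrow>
     DD T \<phi> u \<and> (AE t in lebesgue. t \<in> {0..T} \<longrightarrow> Lop T \<phi> f h u t = 0)"

definition strict_upper_solution ::
  "real \<Rightarrow> (real \<Rightarrow> real) \<Rightarrow> (real \<Rightarrow> real) \<Rightarrow> (real \<Rightarrow> real \<Rightarrow> real) \<Rightarrow> (real \<Rightarrow> real) \<Rightarrow> bool" where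
  "strict_upper_solution T \<phi> f h \<beta> \<longleftrightarrow>
     DD T \<phi> \<beta> \<and>
     (AE t in lebesgue. t \<in> {0..T} \<longrightarrow> Lop T \<phi> f h \<beta> t < 0) \<and>
     (\<forall>u. periodic_solution T \<phi> f h u \<and> (\<forall>t\<in>{0..T}. u t \<le> \<beta> t)
          \<longrightarrow> (\<forall>t\<in>{0..T}. u t < \<beta> t))"

definition caratheodory :: "real \<Rightarrow> (real \<Rightarrow> real \<Rightarrow> real) \<Rightarrow> bool" where
  "caratheodory T h \<longleftrightarrow>
     (\<forall>u. (\<lambda>t. h t u) \<in> borel_measurable (lebesgue_on {0..T})) \<and>
     (\<forall>t\<in>{0..T}. continuous_on UNIV (h t)) \<and>
     (\<forall>r>0. \<exists>g. g absolutely_integrable_on {0..T} \<and>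
        (\<forall>t\<in>{0..T}. \<forall>u. \<bar>u\<bar> \<le> r \<longrightarrow> \<bar>h t u\<bar> \<le> g t))"

end

theory Submission
  imports Defs
begin

lemma ac_index:
  fixes F :: "real \<Rightarrow> real" and X :: "'i set"
  assumes ac: "abs_continuous_on lo hi F" and e: "\<epsilon> > 0"
  obtains \<delta> where "\<delta> > 0" "\<And>(X::'i set) \<alpha> \<beta>. finite X \<Longrightarrow> (\<forall>i\<in>X. lo \<le> \<alpha> i \<and> \<alpha> i \<le> \<beta> i \<and> \<beta> i \<le> hi) \<Longrightarrow>
     (\<forall>i\<in>X. \<forall>j\<in>X. i \<noteq> j \<longrightarrow> \<beta> i \<le> \<alpha> j \<or> \<beta> j \<le> \<alpha> i) \<Longrightarrow>
     (\<Sum>i\<in>X. \<beta> i - \<alpha> i) < \<delta> \<Longrightarrow> (\<Sum>i\<in>X. \<bar>F (\<beta> i) - F (\<alpha> i)\<bar>) < \<epsilon>"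
proof -
  have "\<exists>\<delta>>0. \<forall>(n::nat) (a::nat \<Rightarrow> real) (b::nat \<Rightarrow> real).
        (\<forall>i<n. lo \<le> a i \<and> a i \<le> b i \<and> b i \<le> hi) \<and>
        (\<forall>i<n. \<forall>j<n. i \<noteq> j \<longrightarrow> b i \<le> a j \<or> b j \<le> a i) \<and>
        (\<Sum>i<n. b i - a i) < \<delta>
        \<longrightarrow> (\<Sum>i<n. \<bar>F (b i) - F (a i)\<bar>) < \<epsilon>"
    using ac e unfolding abs_continuous_on_def by blast
  then obtain \<delta> where d: "\<delta> > 0" and H: "\<forall>(n::nat) (a::nat \<Rightarrow> real) (b::nat \<Rightarrow> real).
        (\<forall>i<n. lo \<le> a i \<and> a i \<le> b i \<and> b i \<le> hi) \<and>
        (\<forall>i<n. \<forall>j<n. i \<noteq> j \<longrightarrow> b i \<le> a j \<or> b j \<le> a i) \<and>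
        (\<Sum>i<n. b i - a i) < \<delta>
        \<longrightarrow> (\<Sum>i<n. \<bar>F (b i) - F (a i)\<bar>) < \<epsilon>" by blast
  show ?thesis
  proof (rule that[OF d])
    fix X :: "'i set" and \<alpha> \<beta>
    assume fin: "finite X" and h1: "\<forall>i\<in>X. lo \<le> \<alpha> i \<and> \<alpha> i \<le> \<beta> i \<and> \<beta> i \<le> hi"
      and h2: "\<forall>i\<in>X. \<forall>j\<in>X. i \<noteq> j \<longrightarrow> \<beta> i \<le> \<alpha> j \<or> \<beta> j \<le> \<alpha> i"
      and h3: "(\<Sum>i\<in>X. \<beta> i - \<alpha> i) < \<delta>"
    obtain g where g: "bij_betw g {..<card X} X"
      using fin ex_bij_betw_nat_finite lessThan_atLeast0 by metis
    have s1: "(\<Sum>i<card X. \<beta> (g i) - \<alpha> (g i)) = (\<Sum>i\<in>X. \<beta> i - \<alpha> i)"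
      using sum.reindex_bij_betw[OF g, of "\<lambda>i. \<beta> i - \<alpha> i"] by simp
    have s2: "(\<Sum>i<card X. \<bar>F (\<beta> (g i)) - F (\<alpha> (g i))\<bar>) = (\<Sum>i\<in>X. \<bar>F (\<beta> i) - F (\<alpha> i)\<bar>)"
      using sum.reindex_bij_betw[OF g, of "\<lambda>i. \<bar>F (\<beta> i) - F (\<alpha> i)\<bar>"] by simp
    have gi: "i < card X \<Longrightarrow> g i \<in> X" for i using g bij_betwE by blast
    have ginj: "i < card X \<Longrightarrow> j < card X \<Longrightarrow> i \<noteq> j \<Longrightarrow> g i \<noteq> g j" for i j
      using g unfolding bij_betw_def inj_on_def by blast
    have "(\<Sum>i<card X. \<bar>F (\<beta> (g i)) - F (\<alpha> (g i))\<bar>) < \<epsilon>"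
    proof (rule H[rule_format], intro conjI allI impI)
      fix i assume "i < card X" then show "lo \<le> \<alpha> (g i)" "\<alpha> (g i) \<le> \<beta> (g i)" "\<beta> (g i) \<le> hi"
        using h1 gi by auto
    next
      fix i j assume "i < card X" "j < card X" "i \<noteq> j"
      then show "\<beta> (g i) \<le> \<alpha> (g j) \<or> \<beta> (g j) \<le> \<alpha> (g i)"
        using h2 gi ginj by blast
    next
      show "(\<Sum>i<card X. \<beta> (g i) - \<alpha> (g i)) < \<delta>" using s1 h3 by simp
    qed
    then show "(\<Sum>i\<in>X. \<bar>F (\<beta> i) - F (\<alpha> i)\<bar>) < \<epsilon>" using s2 by simp
  qed
qed

lemma ac_sub:
  assumes ac: "abs_continuous_on lo hi F" and l: "lo \<le> lo'" and h: "hi' \<le> hi"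
  shows "abs_continuous_on lo' hi' F"
  unfolding abs_continuous_on_def
proof (intro allI impI)
  fix e :: real assume "e > 0"
  then obtain d where d: "d > 0" and H: "\<forall>(n::nat) (a::nat \<Rightarrow> real) (b::nat \<Rightarrow> real).
        (\<forall>i<n. lo \<le> a i \<and> a i \<le> b i \<and> b i \<le> hi) \<and>
        (\<forall>i<n. \<forall>j<n. i \<noteq> j \<longrightarrow> b i \<le> a j \<or> b j \<le> a i) \<and>
        (\<Sum>i<n. b i - a i) < d
        \<longrightarrow> (\<Sum>i<n. \<bar>F (b i) - F (a i)\<bar>) < e"
    using ac unfolding abs_continuous_on_def by blast
  show "\<exists>\<delta>>0. \<forall>(n::nat) (a::nat \<Rightarrow> real) (b::nat \<Rightarrow> real).
        (\<forall>i<n. lo' \<le> a i \<and> a i \<le> b i \<and> b i \<le> hi') \<and>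
        (\<forall>i<n. \<forall>j<n. i \<noteq> j \<longrightarrow> b i \<le> a j \<or> b j \<le> a i) \<and>
        (\<Sum>i<n. b i - a i) < \<delta>
        \<longrightarrow> (\<Sum>i<n. \<bar>F (b i) - F (a i)\<bar>) < e"
  proof (intro exI[of _ d] conjI allI impI d)
    fix n :: nat and a b :: "nat \<Rightarrow> real"
    assume A: "(\<forall>i<n. lo' \<le> a i \<and> a i \<le> b i \<and> b i \<le> hi') \<and>
        (\<forall>i<n. \<forall>j<n. i \<noteq> j \<longrightarrow> b i \<le> a j \<or> b j \<le> a i) \<and>
        (\<Sum>i<n. b i - a i) < d"
    have "(\<forall>i<n. lo \<le> a i \<and> a i \<le> b i \<and> b i \<le> hi)"
    proof (intro allI impI)
      fix i assume "i < n" then have "lo' \<le> a i \<and> a i \<le> b i \<and> b i \<le> hi'" using A by blast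
      then show "lo \<le> a i \<and> a i \<le> b i \<and> b i \<le> hi" using l h by linarith
    qed
    then show "(\<Sum>i<n. \<bar>F (b i) - F (a i)\<bar>) < e" using H[rule_format, of n a b] A by simp
  qed
qed

lemma ac_diff:
  assumes f: "abs_continuous_on lo hi F" and g: "abs_continuous_on lo hi G"
  shows "abs_continuous_on lo hi (\<lambda>x. F x - G x)"
proof -
  have key: "\<forall>e>0. \<exists>\<delta>>0. \<forall>(n::nat) (a::nat \<Rightarrow> real) (b::nat \<Rightarrow> real). (\<forall>i<n. lo \<le> a i \<and> a i \<le> b i \<and> b i \<le> hi) \<and>
        (\<forall>i<n. \<forall>j<n. i \<noteq> j \<longrightarrow> b i \<le> a j \<or> b j \<le> a i) \<and>
        (\<Sum>i<n. b i - a i) < \<delta> \<longrightarrow> (\<Sum>i<n. \<bar>F (b i) - G (b i) - (F (a i) - G (a i))\<bar>) < e"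
proof (intro allI impI)
  fix e :: real assume e: "e > 0"
  have e2: "e/2 > 0" using e by simp
  have "\<exists>\<delta>>0. \<forall>(n::nat) (a::nat \<Rightarrow> real) (b::nat \<Rightarrow> real). (\<forall>i<n. lo \<le> a i \<and> a i \<le> b i \<and> b i \<le> hi) \<and>
        (\<forall>i<n. \<forall>j<n. i \<noteq> j \<longrightarrow> b i \<le> a j \<or> b j \<le> a i) \<and>
        (\<Sum>i<n. b i - a i) < \<delta> \<longrightarrow> (\<Sum>i<n. \<bar>F (b i) - F (a i)\<bar>) < e/2"
    using f e2 unfolding abs_continuous_on_def by blast
  then obtain d1 where d1: "d1 > 0" and H1: "\<forall>(n::nat) (a::nat \<Rightarrow> real) (b::nat \<Rightarrow> real). (\<forall>i<n. lo \<le> a i \<and> a i \<le> b i \<and> b i \<le> hi) \<and>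
        (\<forall>i<n. \<forall>j<n. i \<noteq> j \<longrightarrow> b i \<le> a j \<or> b j \<le> a i) \<and>
        (\<Sum>i<n. b i - a i) < d1 \<longrightarrow> (\<Sum>i<n. \<bar>F (b i) - F (a i)\<bar>) < e/2" by blast
  have "\<exists>\<delta>>0. \<forall>(n::nat) (a::nat \<Rightarrow> real) (b::nat \<Rightarrow> real). (\<forall>i<n. lo \<le> a i \<and> a i \<le> b i \<and> b i \<le> hi) \<and>
        (\<forall>i<n. \<forall>j<n. i \<noteq> j \<longrightarrow> b i \<le> a j \<or> b j \<le> a i) \<and>
        (\<Sum>i<n. b i - a i) < \<delta> \<longrightarrow> (\<Sum>i<n. \<bar>G (b i) - G (a i)\<bar>) < e/2"
    using g e2 unfolding abs_continuous_on_def by blast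
  then obtain d2 where d2: "d2 > 0" and H2: "\<forall>(n::nat) (a::nat \<Rightarrow> real) (b::nat \<Rightarrow> real). (\<forall>i<n. lo \<le> a i \<and> a i \<le> b i \<and> b i \<le> hi) \<and>
        (\<forall>i<n. \<forall>j<n. i \<noteq> j \<longrightarrow> b i \<le> a j \<or> b j \<le> a i) \<and>
        (\<Sum>i<n. b i - a i) < d2 \<longrightarrow> (\<Sum>i<n. \<bar>G (b i) - G (a i)\<bar>) < e/2" by blast
  show "\<exists>\<delta>>0. \<forall>(n::nat) (a::nat \<Rightarrow> real) (b::nat \<Rightarrow> real). (\<forall>i<n. lo \<le> a i \<and> a i \<le> b i \<and> b i \<le> hi) \<and>
        (\<forall>i<n. \<forall>j<n. i \<noteq> j \<longrightarrow> b i \<le> a j \<or> b j \<le> a i) \<and>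
        (\<Sum>i<n. b i - a i) < \<delta> \<longrightarrow> (\<Sum>i<n. \<bar>F (b i) - G (b i) - (F (a i) - G (a i))\<bar>) < e"
  proof (intro exI[of _ "min d1 d2"] conjI allI impI)
    show "min d1 d2 > 0" using d1 d2 by simp
    fix n a b assume h: "(\<forall>i<(n::nat). lo \<le> a i \<and> a i \<le> b i \<and> b i \<le> hi) \<and>
        (\<forall>i<n. \<forall>j<n. i \<noteq> j \<longrightarrow> b i \<le> a j \<or> b j \<le> a i) \<and>
        (\<Sum>i<n. b i - a i) < min d1 d2"
    have "(\<Sum>i<n. \<bar>F (b i) - G (b i) - (F (a i) - G (a i))\<bar>)
        \<le> (\<Sum>i<n. \<bar>F (b i) - F (a i)\<bar> + \<bar>G (b i) - G (a i)\<bar>)"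
      by (rule sum_mono) linarith
    also have "\<dots> = (\<Sum>i<n. \<bar>F (b i) - F (a i)\<bar>) + (\<Sum>i<n. \<bar>G (b i) - G (a i)\<bar>)"
      by (simp add: sum.distrib)
    also have "\<dots> < e/2 + e/2"
      using H1[rule_format, of n a b] H2[rule_format, of n a b] h by (intro add_strict_mono) simp_all
    finally show "(\<Sum>i<n. \<bar>F (b i) - G (b i) - (F (a i) - G (a i))\<bar>) < e" by simp
  qed
qed
  then show ?thesis unfolding abs_continuous_on_def by simp
qed

definition om :: "real set \<Rightarrow> real" where
  "om E = Inf (measure lebesgue ` {T. T \<in> lmeasurable \<and> E \<subseteq> T})"

lemma om_le: "T \<in> lmeasurable \<Longrightarrow> E \<subseteq> T \<Longrightarrow> om E \<le> measure lebesgue T"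
  unfolding om_def by (rule cInf_lower) (auto intro: bdd_belowI[where m=0])

lemma om_approx:
  assumes "E \<subseteq> T0" "T0 \<in> lmeasurable" "e > 0"
  obtains T where "T \<in> lmeasurable" "E \<subseteq> T" "measure lebesgue T < om E + e"
proof -
  have ne: "measure lebesgue ` {T. T \<in> lmeasurable \<and> E \<subseteq> T} \<noteq> {}" using assms by auto
  have "Inf (measure lebesgue ` {T. T \<in> lmeasurable \<and> E \<subseteq> T}) < om E + e"
    using assms(3) unfolding om_def by simp
  then show ?thesis using that
    by (subst (asm) cInf_less_iff[OF ne]) (auto intro: bdd_belowI[where m=0])
qed

lemma om_nonneg: "E \<subseteq> T0 \<Longrightarrow> T0 \<in> lmeasurable \<Longrightarrow> om E \<ge> 0"
  unfolding om_def by (rule cInf_greatest) auto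

lemma om_negligible:
  assumes "E \<subseteq> T0" "T0 \<in> lmeasurable" "om E \<le> 0"
  shows "negligible E"
  unfolding negligible_outer
proof (intro allI impI)
  fix e :: real assume "e > 0"
  then obtain T where "T \<in> lmeasurable" "E \<subseteq> T" "measure lebesgue T < om E + e"
    by (rule om_approx[OF assms(1,2)])
  moreover have "measure lebesgue T < e" using assms(3) \<open>measure lebesgue T < om E + e\<close> by linarith
  ultimately show "\<exists>T. E \<subseteq> T \<and> T \<in> lmeasurable \<and> measure lebesgue T < e" by (intro exI[of _ T] conjI)
qed

lemma om_split:
  assumes "E \<subseteq> T0" "T0 \<in> lmeasurable" "E - A \<subseteq> T" "T \<in> lmeasurable"
  shows "om E \<le> om (E \<inter> A) + measure lebesgue T"
proof (rule field_le_epsilon)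
  fix e :: real assume "e > 0"
  have EA: "E \<inter> A \<subseteq> T0" using assms(1) by blast
  obtain T' where T': "T' \<in> lmeasurable" "E \<inter> A \<subseteq> T'" "measure lebesgue T' < om (E \<inter> A) + e"
    by (rule om_approx[OF EA assms(2) \<open>e>0\<close>])
  have U: "T' \<union> T \<in> lmeasurable" using T'(1) assms(4) by (rule fmeasurable.Un)
  have sub: "E \<subseteq> T' \<union> T" using T'(2) assms(3) by blast
  have "om E \<le> measure lebesgue (T' \<union> T)"
    by (rule om_le[OF U sub])
  also have "\<dots> \<le> measure lebesgue T' + measure lebesgue T"
    using T'(1) assms(4) by (intro measure_Un_le fmeasurableD)
  finally show "om E \<le> om (E \<inter> A) + measure lebesgue T + e" using T' by simp
qed

lemma div_additive:
  fixes F :: "real \<Rightarrow> real"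
  assumes "d division_of {a..b}" "a \<le> b"
  shows "(\<Sum>K\<in>d. F (Sup K) - F (Inf K)) = F b - F a"
proof -
  let ?f = "(\<lambda>K::real set. if K = {} then 0 else F(interval_upperbound K) - F(interval_lowerbound K))"
  interpret operative_real plus 0 ?f
    rewrites "comm_monoid_set.F (+) 0 = sum"
    by standard[1] (auto simp add: sum_def)
  have "d division_of cbox a b" using assms(1) by (subst cbox_interval)
  then have "sum ?f d = ?f (cbox a b)" using division[of d a b] by (simp add: sum_def)
  moreover have "sum ?f d = (\<Sum>K\<in>d. F (Sup K) - F (Inf K))"
  proof (rule sum.cong)
    fix K assume "K \<in> d"
    then obtain u v where "K = cbox u v" "K \<noteq> {}" using assms(1) division_ofD by metis
    then show "?f K = F (Sup K) - F (Inf K)" by auto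
  qed simp
  ultimately show ?thesis using assms by auto
qed

lemma vit:
  fixes S U :: "real set" and P :: "real \<Rightarrow> real \<Rightarrow> bool"
  assumes U: "open U" "bounded U" and SU: "S \<subseteq> U"
    and H: "\<And>x d. x \<in> S \<Longrightarrow> d > 0 \<Longrightarrow> \<exists>p q. p \<le> x \<and> x \<le> q \<and> p < q \<and> q - p < d \<and> P p q"
    and e: "e > 0"
  obtains D T where "finite D" "\<And>p q. (p,q) \<in> D \<Longrightarrow> p < q \<and> {p..q} \<subseteq> U \<and> P p q"
    "\<And>p q p' q'. (p,q) \<in> D \<Longrightarrow> (p',q') \<in> D \<Longrightarrow> (p,q) \<noteq> (p',q') \<Longrightarrow> q < p' \<or> q' < p"
    "T \<in> lmeasurable" "S - (\<Union>(p,q)\<in>D. {p<..<q}) \<subseteq> T" "measure lebesgue T \<le> e"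
proof -
  define K where "K = {i::real\<times>real. snd i > 0 \<and> cball (fst i) (snd i) \<subseteq> U \<and> P (fst i - snd i) (fst i + snd i)}"
  define B where "B i = cball (fst i) (snd i)" for i :: "real \<times> real"
  have Kpos: "\<And>i. i \<in> K \<Longrightarrow> 0 < snd i" unfolding K_def by blast
  have cov: "\<exists>i. i \<in> K \<and> x \<in> cball (fst i) (snd i) \<and> snd i < d" if x: "x \<in> S" and d: "0 < d" for x d
  proof -
    obtain \<eta> where \<eta>: "\<eta> > 0" "ball x \<eta> \<subseteq> U" using U(1) SU x open_contains_ball by blast
    have md: "min d \<eta> > 0" using d \<eta> by simp
    obtain p q where pq: "p \<le> x" "x \<le> q" "p < q" "q - p < min d \<eta>" "P p q"
      using H[OF x md] by blast
    define c where "c = (p+q)/2"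
    define r where "r = (q-p)/2"
    have cr: "c - r = p" "c + r = q" unfolding c_def r_def by (simp_all add: field_simps)
    have cb: "cball c r = {p..q}" using cr by (simp add: cball_eq_atLeastAtMost)
    have "{p..q} \<subseteq> ball x \<eta>"
    proof
      fix y assume "y \<in> {p..q}"
      then have "\<bar>y - x\<bar> < \<eta>" using pq by auto
      then show "y \<in> ball x \<eta>" by (simp add: dist_real_def abs_minus_commute)
    qed
    then have "cball c r \<subseteq> U" using cb \<eta> by blast
    moreover have "r > 0" using pq unfolding r_def by simp
    moreover have "P (c - r) (c + r)" using cr pq by simp
    ultimately have "(c,r) \<in> K" unfolding K_def by simp
    moreover have "x \<in> cball c r" using cb pq by simp
    moreover have "r < d" using pq unfolding r_def by simp
    ultimately show ?thesis by (intro exI[of _ "(c,r)"]) simp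
  qed
  obtain C where C: "countable C" "C \<subseteq> K"
    and pw: "pairwise (\<lambda>i j. disjnt (cball (fst i) (snd i)) (cball (fst j) (snd j))) C"
    and neg: "negligible (S - (\<Union>i\<in>C. cball (fst i) (snd i)))"
    using Vitali_covering_theorem_cballs[of K snd S fst, OF Kpos cov] by blast
  have Ulm: "U \<in> lmeasurable" using U by (simp add: lmeasurable_open)
  have BU: "i \<in> C \<Longrightarrow> B i \<subseteq> U" for i using C(2) unfolding K_def B_def by blast
  let ?D = "B ` C"
  have cD: "countable ?D" using C(1) by simp
  have mD: "d \<in> lmeasurable" if "d \<in> ?D" for d using that unfolding B_def by auto
  have bD: "measure lebesgue (\<Union>D') \<le> measure lebesgue U" if "D' \<subseteq> ?D" "finite D'" for D'
  proof (rule measure_mono_fmeasurable)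
    show "\<Union>D' \<in> sets lebesgue" using that mD by (intro sets.finite_Union) auto
    show "\<Union>D' \<subseteq> U" using that BU by blast
    show "U \<in> fmeasurable lebesgue" using Ulm .
  qed
  obtain D' where D': "D' \<subseteq> ?D" "finite D'" "measure lebesgue (\<Union>?D) - e < measure lebesgue (\<Union>D')"
    using measure_countable_Union_approachable[OF cD e mD bD] by blast
  obtain C' where C': "C' \<subseteq> C" "finite C'" "D' = B ` C'"
    using finite_subset_image[OF D'(2) D'(1)] by blast
  have UDsets: "\<Union>?D \<in> sets lebesgue" using cD mD by (intro sets.countable_Union) auto
  have UDlm: "\<Union>?D \<in> lmeasurable"
  proof (rule bounded_set_imp_lmeasurable[OF _ UDsets])
    show "bounded (\<Union>?D)" using U(2) BU by (meson UN_least bounded_subset)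
  qed
  have UD'sets: "\<Union>D' \<in> sets lebesgue" using D' mD by (intro sets.finite_Union) auto
  have UD'sub: "\<Union>D' \<subseteq> \<Union>?D" using D'(1) by blast
  define N where "N = S - \<Union>?D"
  define Ep where "Ep = (\<Union>i\<in>C'. {fst i - snd i, fst i + snd i})"
  define T where "T = N \<union> (\<Union>?D - \<Union>D') \<union> Ep"
  have Nn: "negligible N" using neg unfolding N_def B_def by simp
  have Epf: "finite Ep" unfolding Ep_def using C'(2) by simp
  have Epn: "negligible Ep" using Epf by (rule negligible_finite)
  have m1: "N \<in> lmeasurable" using Nn by (rule negligible_imp_measurable)
  have m2: "\<Union>?D - \<Union>D' \<in> lmeasurable" using UDlm UD'sets by (rule fmeasurable_Diff)
  have m3: "Ep \<in> lmeasurable" using Epn by (rule negligible_imp_measurable)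
  have Tlm: "T \<in> lmeasurable" unfolding T_def using m1 m2 m3 by (intro fmeasurable.Un)
  have "measure lebesgue T \<le> measure lebesgue (N \<union> (\<Union>?D - \<Union>D')) + measure lebesgue Ep"
    unfolding T_def using m1 m2 m3 by (intro measure_Un_le fmeasurableD fmeasurable.Un)
  also have "\<dots> \<le> measure lebesgue N + measure lebesgue (\<Union>?D - \<Union>D') + measure lebesgue Ep"
    using m1 m2 by (simp add: measure_Un_le fmeasurableD)
  also have "measure lebesgue N = 0" using Nn by (rule negligible_imp_measure0)
  also have "measure lebesgue Ep = 0" using Epn by (rule negligible_imp_measure0)
  also have "measure lebesgue (\<Union>?D - \<Union>D') = measure lebesgue (\<Union>?D) - measure lebesgue (\<Union>D')"
    using UDlm UD'sets UD'sub by (intro measure_Diff) (auto simp: fmeasurable_def)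
  finally have Tle: "measure lebesgue T \<le> e" using D'(3) by simp
  define f where "f i = (fst i - snd i, fst i + snd i)" for i :: "real \<times> real"
  define D where "D = f ` C'"
  have Bi: "B i = {fst i - snd i .. fst i + snd i}" for i unfolding B_def by (simp add: cball_eq_atLeastAtMost)
  show thesis
  proof (rule that[of D T])
    show "finite D" unfolding D_def using C'(2) by simp
    show "T \<in> lmeasurable" by (rule Tlm)
    show "measure lebesgue T \<le> e" by (rule Tle)
  next
    fix p q assume "(p,q) \<in> D"
    then obtain i where i: "i \<in> C'" "(p,q) = f i" unfolding D_def by blast
    then have iK: "i \<in> K" using C' C by blast
    have pq: "p = fst i - snd i" "q = fst i + snd i" using i(2) unfolding f_def by auto
    show "p < q \<and> {p..q} \<subseteq> U \<and> P p q"
      using iK pq unfolding K_def by (auto simp: cball_eq_atLeastAtMost)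
  next
    fix p q p' q' assume a: "(p,q) \<in> D" "(p',q') \<in> D" "(p,q) \<noteq> (p',q')"
    then obtain i j where ij: "i \<in> C'" "(p,q) = f i" "j \<in> C'" "(p',q') = f j" unfolding D_def by blast
    then have "i \<noteq> j" using a(3) by metis
    moreover have "i \<in> C" "j \<in> C" using ij C' by blast+
    ultimately have dj: "disjnt (B i) (B j)" using pw unfolding pairwise_def B_def by blast
    have pq: "p = fst i - snd i" "q = fst i + snd i" "p' = fst j - snd j" "q' = fst j + snd j"
      using ij unfolding f_def by auto
    have pos: "snd i > 0" "snd j > 0" using \<open>i \<in> C\<close> \<open>j \<in> C\<close> C(2) Kpos by blast+
    show "q < p' \<or> q' < p"
    proof (rule ccontr)
      assume "\<not> (q < p' \<or> q' < p)"
      then have "max p p' \<in> B i" "max p p' \<in> B j" using pq pos unfolding Bi by auto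
      then show False using dj unfolding disjnt_def by blast
    qed
  next
    show "S - (\<Union>(p,q)\<in>D. {p<..<q}) \<subseteq> T"
    proof
      fix x assume x: "x \<in> S - (\<Union>(p,q)\<in>D. {p<..<q})"
      show "x \<in> T"
      proof (cases "x \<in> \<Union>?D")
        case False then show ?thesis using x unfolding T_def N_def by blast
      next
        case True
        then obtain i where i: "i \<in> C" "x \<in> B i" by blast
        show ?thesis
        proof (cases "x \<in> \<Union>D'")
          case False then show ?thesis using True unfolding T_def by blast
        next
          case True
          then obtain j where j: "j \<in> C'" "x \<in> B j" using C'(3) by blast
          have "i = j"
          proof (rule ccontr)
            assume "i \<noteq> j"
            moreover have "j \<in> C" using j C' by blast
            ultimately have "disjnt (B i) (B j)" using pw i unfolding pairwise_def B_def by blast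
            then show False using i j unfolding disjnt_def by blast
          qed
          have "f j \<in> D" unfolding D_def using j by blast
          then have "x \<notin> {fst j - snd j <..< fst j + snd j}" using x unfolding f_def by blast
          moreover have "x \<in> {fst j - snd j .. fst j + snd j}" using j Bi by blast
          ultimately have "x = fst j - snd j \<or> x = fst j + snd j" by auto
          then have "x \<in> Ep" unfolding Ep_def using j by blast
          then show ?thesis unfolding T_def by blast
        qed
      qed
    qed
  qed
qed

lemma cbox_props:
  fixes a b :: real
  assumes "K = cbox a b" "K \<noteq> {}"
  shows "Inf K = a" "Sup K = b" "a \<le> b" "Henstock_Kurzweil_Integration.content K = b - a"
  using assms by auto

lemma gap_main:
  fixes F :: "real \<Rightarrow> real" and D1 D2 :: "(real \<times> real) set"
  assumes AC: "\<And>(X::((real\<times>real)\<times>real set) set) \<alpha> \<beta>. finite X \<Longrightarrow> (\<forall>i\<in>X. lo \<le> \<alpha> i \<and> \<alpha> i \<le> \<beta> i \<and> \<beta> i \<le> hi) \<Longrightarrow>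
     (\<forall>i\<in>X. \<forall>j\<in>X. i \<noteq> j \<longrightarrow> \<beta> i \<le> \<alpha> j \<or> \<beta> j \<le> \<alpha> i) \<Longrightarrow>
     (\<Sum>i\<in>X. \<beta> i - \<alpha> i) < \<delta> \<Longrightarrow> (\<Sum>i\<in>X. \<bar>F (\<beta> i) - F (\<alpha> i)\<bar>) < \<epsilon>"
    and fin1: "finite D1" and fin2: "finite D2"
    and D1b: "\<And>p q. (p,q) \<in> D1 \<Longrightarrow> lo \<le> p \<and> p < q \<and> q \<le> hi"
    and D1d: "\<And>p q p' q'. (p,q) \<in> D1 \<Longrightarrow> (p',q') \<in> D1 \<Longrightarrow> (p,q) \<noteq> (p',q') \<Longrightarrow> q < p' \<or> q' < p"
    and D2d: "\<And>p q p' q'. (p,q) \<in> D2 \<Longrightarrow> (p',q') \<in> D2 \<Longrightarrow> (p,q) \<noteq> (p',q') \<Longrightarrow> q < p' \<or> q' < p"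
    and D2s: "\<And>p q. (p,q) \<in> D2 \<Longrightarrow> p < q \<and> (\<exists>p' q'. (p',q') \<in> D1 \<and> p' \<le> p \<and> q \<le> q')"
    and small: "(\<Sum>(p,q)\<in>D1. q - p) - (\<Sum>(p,q)\<in>D2. q - p) < \<delta>"
  shows "\<bar>(\<Sum>(p,q)\<in>D1. F q - F p) - (\<Sum>(p,q)\<in>D2. F q - F p)\<bar> < \<epsilon>"
proof -
  define S where "S I = {J \<in> D2. fst I \<le> fst J \<and> snd J \<le> snd I}" for I :: "real \<times> real"
  define cbx where "cbx J = {fst J .. snd J}" for J :: "real \<times> real"
  have D2lt: "J \<in> D2 \<Longrightarrow> fst J < snd J" for J using D2s[of "fst J" "snd J"] by simp
  have D1lt: "I \<in> D1 \<Longrightarrow> fst I < snd I" for I using D1b[of "fst I" "snd I"] by simp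
  have D2disj: "J \<in> D2 \<Longrightarrow> J' \<in> D2 \<Longrightarrow> J \<noteq> J' \<Longrightarrow> snd J < fst J' \<or> snd J' < fst J" for J J'
    using D2d[of "fst J" "snd J" "fst J'" "snd J'"] by simp
  have D1disj: "I \<in> D1 \<Longrightarrow> I' \<in> D1 \<Longrightarrow> I \<noteq> I' \<Longrightarrow> snd I < fst I' \<or> snd I' < fst I" for I I'
    using D1d[of "fst I" "snd I" "fst I'" "snd I'"] by simp
  have cbx_inj: "inj_on cbx D2"
  proof (rule inj_onI)
    fix J J' assume "J \<in> D2" "J' \<in> D2" "cbx J = cbx J'"
    then show "J = J'" using D2lt[of J] D2lt[of J'] unfolding cbx_def
      by (metis Icc_eq_Icc not_less order_less_imp_le prod_eqI)
  qed
  have Sfin: "finite (S I)" for I unfolding S_def using fin2 by simp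
  have divS: "cbx ` S I division_of \<Union>(cbx ` S I)" for I
  proof (rule division_ofI)
    show "finite (cbx ` S I)" using Sfin by simp
  next
    fix K assume "K \<in> cbx ` S I"
    then obtain J where J: "J \<in> S I" "K = cbx J" by blast
    then have "J \<in> D2" unfolding S_def by blast
    then have lt: "fst J < snd J" using D2lt by blast
    have Kc: "K = cbox (fst J) (snd J)" using J(2) unfolding cbx_def by simp
    show "K \<noteq> {}" using Kc lt by simp
    show "\<exists>a b. K = cbox a b" using Kc by blast
    show "K \<subseteq> \<Union>(cbx ` S I)" using J by blast
  next
    fix K1 K2 assume K: "K1 \<in> cbx ` S I" "K2 \<in> cbx ` S I" "K1 \<noteq> K2"
    then obtain J1 J2 where J: "J1 \<in> D2" "K1 = cbx J1" "J2 \<in> D2" "K2 = cbx J2" unfolding S_def by blast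
    then have "J1 \<noteq> J2" using K(3) by blast
    then have "snd J1 < fst J2 \<or> snd J2 < fst J1" using D2disj J by blast
    then show "interior K1 \<inter> interior K2 = {}" using J unfolding cbx_def by auto
  qed simp
  have Ssub: "\<Union>(cbx ` S I) \<subseteq> cbox (fst I) (snd I)" for I unfolding S_def cbx_def by auto
  have "\<forall>I\<in>D1. \<exists>q. cbx ` S I \<subseteq> q \<and> q division_of cbox (fst I) (snd I)"
    using partial_division_extend_interval[OF divS Ssub] by metis
  then obtain Q where Q: "\<And>I. I \<in> D1 \<Longrightarrow> cbx ` S I \<subseteq> Q I" "\<And>I. I \<in> D1 \<Longrightarrow> Q I division_of cbox (fst I) (snd I)"
    by metis
  define G where "G I = {K \<in> Q I - cbx ` S I. Henstock_Kurzweil_Integration.content K > 0}" for I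
  have Qfin: "I \<in> D1 \<Longrightarrow> finite (Q I)" for I using Q(2) by blast
  have Gfin: "I \<in> D1 \<Longrightarrow> finite (G I)" for I unfolding G_def using Qfin by simp
  have Qel: "I \<in> D1 \<Longrightarrow> K \<in> Q I \<Longrightarrow> \<exists>a b. K = cbox a b \<and> K \<noteq> {} \<and> K \<subseteq> cbox (fst I) (snd I)" for I K
  proof -
    assume a: "I \<in> D1" "K \<in> Q I"
    have d: "Q I division_of cbox (fst I) (snd I)" using Q(2)[OF a(1)] .
    obtain u v where "K = cbox u v" using division_ofD(4)[OF d a(2)] by blast
    moreover have "K \<noteq> {}" using division_ofD(3)[OF d a(2)] .
    moreover have "K \<subseteq> cbox (fst I) (snd I)" using division_ofD(2)[OF d a(2)] .
    ultimately show ?thesis by blast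
  qed
  have dF0: "I \<in> D1 \<Longrightarrow> K \<in> Q I \<Longrightarrow> Henstock_Kurzweil_Integration.content K = 0 \<Longrightarrow> F (Sup K) - F (Inf K) = 0" for I K
  proof -
    assume a: "I \<in> D1" "K \<in> Q I" "Henstock_Kurzweil_Integration.content K = 0"
    obtain u v where uv: "K = cbox u v" "K \<noteq> {}" using Qel[OF a(1,2)] by blast
    note cp = cbox_props[OF uv]
    have "Sup K = Inf K" using cp a(3) by linarith
    then show ?thesis by simp
  qed
  have eqF: "F (snd I) - F (fst I) = (\<Sum>J\<in>S I. F (snd J) - F (fst J)) + (\<Sum>K\<in>G I. F (Sup K) - F (Inf K))"
    if I: "I \<in> D1" for I
  proof -
    have "F (snd I) - F (fst I) = (\<Sum>K\<in>Q I. F (Sup K) - F (Inf K))"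
      using div_additive[of "Q I" "fst I" "snd I" F] Q(2)[OF I] D1lt[OF I] by simp
    also have "\<dots> = (\<Sum>K\<in>cbx ` S I. F (Sup K) - F (Inf K)) + (\<Sum>K\<in>Q I - cbx ` S I. F (Sup K) - F (Inf K))"
      using Q(1)[OF I] Qfin[OF I] by (metis (no_types, lifting) sum.subset_diff add.commute)
    also have "(\<Sum>K\<in>cbx ` S I. F (Sup K) - F (Inf K)) = (\<Sum>J\<in>S I. F (snd J) - F (fst J))"
    proof -
      have "inj_on cbx (S I)" using cbx_inj unfolding S_def by (rule inj_on_subset) blast
      then have "(\<Sum>K\<in>cbx ` S I. F (Sup K) - F (Inf K)) = (\<Sum>J\<in>S I. F (Sup (cbx J)) - F (Inf (cbx J)))"
        by (simp add: sum.reindex)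
      also have "\<dots> = (\<Sum>J\<in>S I. F (snd J) - F (fst J))"
      proof (rule sum.cong)
        fix J assume "J \<in> S I"
        then have "fst J < snd J" using D2lt unfolding S_def by blast
        then show "F (Sup (cbx J)) - F (Inf (cbx J)) = F (snd J) - F (fst J)" unfolding cbx_def by simp
      qed simp
      finally show ?thesis .
    qed
    also have "(\<Sum>K\<in>Q I - cbx ` S I. F (Sup K) - F (Inf K)) = (\<Sum>K\<in>G I. F (Sup K) - F (Inf K))"
    proof (rule sum.mono_neutral_right)
      show "finite (Q I - cbx ` S I)" using Qfin[OF I] by simp
      show "G I \<subseteq> Q I - cbx ` S I" unfolding G_def by blast
      show "\<forall>K\<in>Q I - cbx ` S I - G I. F (Sup K) - F (Inf K) = 0"
      proof
        fix K assume K: "K \<in> Q I - cbx ` S I - G I"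
        then have "Henstock_Kurzweil_Integration.content K \<le> 0" unfolding G_def by auto
        then have "Henstock_Kurzweil_Integration.content K = 0" using content_pos_le[of K] by linarith
        then show "F (Sup K) - F (Inf K) = 0" using dF0[OF I] K by blast
      qed
    qed
    finally show ?thesis .
  qed
  have eqC: "snd I - fst I = (\<Sum>J\<in>S I. snd J - fst J) + (\<Sum>K\<in>G I. Henstock_Kurzweil_Integration.content K)"
    if I: "I \<in> D1" for I
  proof -
    have "snd I - fst I = (\<Sum>K\<in>Q I. Henstock_Kurzweil_Integration.content K)"
      using additive_content_division[OF Q(2)[OF I]] D1lt[OF I] by simp
    also have "\<dots> = (\<Sum>K\<in>cbx ` S I. Henstock_Kurzweil_Integration.content K) + (\<Sum>K\<in>Q I - cbx ` S I. Henstock_Kurzweil_Integration.content K)"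
      using Q(1)[OF I] Qfin[OF I] by (metis (no_types, lifting) sum.subset_diff add.commute)
    also have "(\<Sum>K\<in>cbx ` S I. Henstock_Kurzweil_Integration.content K) = (\<Sum>J\<in>S I. snd J - fst J)"
    proof -
      have "inj_on cbx (S I)" using cbx_inj unfolding S_def by (rule inj_on_subset) blast
      then have "(\<Sum>K\<in>cbx ` S I. Henstock_Kurzweil_Integration.content K) = (\<Sum>J\<in>S I. Henstock_Kurzweil_Integration.content (cbx J))"
        by (simp add: sum.reindex)
      also have "\<dots> = (\<Sum>J\<in>S I. snd J - fst J)"
      proof (rule sum.cong)
        fix J assume "J \<in> S I"
        then have "fst J < snd J" using D2lt unfolding S_def by blast
        then show "Henstock_Kurzweil_Integration.content (cbx J) = snd J - fst J" unfolding cbx_def by simp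
      qed simp
      finally show ?thesis .
    qed
    also have "(\<Sum>K\<in>Q I - cbx ` S I. Henstock_Kurzweil_Integration.content K) = (\<Sum>K\<in>G I. Henstock_Kurzweil_Integration.content K)"
    proof (rule sum.mono_neutral_right)
      show "finite (Q I - cbx ` S I)" using Qfin[OF I] by simp
      show "G I \<subseteq> Q I - cbx ` S I" unfolding G_def by blast
      show "\<forall>K\<in>Q I - cbx ` S I - G I. Henstock_Kurzweil_Integration.content K = 0"
        using content_pos_le unfolding G_def by (auto simp: less_le)
    qed
    finally show ?thesis .
  qed
  have D2U: "D2 = \<Union>(S ` D1)"
  proof
    show "D2 \<subseteq> \<Union>(S ` D1)"
    proof
      fix J assume J: "J \<in> D2"
      then obtain p' q' where "(p',q') \<in> D1" "p' \<le> fst J" "snd J \<le> q'"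
        using D2s[of "fst J" "snd J"] by auto
      then have "J \<in> S (p',q')" using J unfolding S_def by simp
      then show "J \<in> \<Union>(S ` D1)" using \<open>(p',q') \<in> D1\<close> by blast
    qed
    show "\<Union>(S ` D1) \<subseteq> D2" unfolding S_def by blast
  qed
  have Sdisj: "\<forall>I\<in>D1. \<forall>I'\<in>D1. I \<noteq> I' \<longrightarrow> S I \<inter> S I' = {}"
  proof (intro ballI impI)
    fix I I' assume I: "I \<in> D1" "I' \<in> D1" "I \<noteq> I'"
    show "S I \<inter> S I' = {}"
    proof (rule ccontr)
      assume "S I \<inter> S I' \<noteq> {}"
      then obtain J where J: "J \<in> S I" "J \<in> S I'" by blast
      then have "fst J < snd J" using D2lt unfolding S_def by blast
      then show False using J D1disj[OF I] unfolding S_def by auto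
    qed
  qed
  have sumD2: "(\<Sum>J\<in>D2. g J) = (\<Sum>I\<in>D1. \<Sum>J\<in>S I. g J)" for g :: "real \<times> real \<Rightarrow> real"
    unfolding D2U using fin1 Sfin Sdisj by (intro sum.UNION_disjoint) auto
  have diffF: "(\<Sum>(p,q)\<in>D1. F q - F p) - (\<Sum>(p,q)\<in>D2. F q - F p) = (\<Sum>I\<in>D1. \<Sum>K\<in>G I. F (Sup K) - F (Inf K))"
  proof -
    have "(\<Sum>(p,q)\<in>D1. F q - F p) = (\<Sum>I\<in>D1. F (snd I) - F (fst I))" by (simp add: case_prod_beta)
    also have "\<dots> = (\<Sum>I\<in>D1. (\<Sum>J\<in>S I. F (snd J) - F (fst J)) + (\<Sum>K\<in>G I. F (Sup K) - F (Inf K)))"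
      using eqF by (rule sum.cong[OF refl])
    also have "\<dots> = (\<Sum>J\<in>D2. F (snd J) - F (fst J)) + (\<Sum>I\<in>D1. \<Sum>K\<in>G I. F (Sup K) - F (Inf K))"
      by (simp add: sum.distrib sumD2)
    finally show ?thesis by (simp add: case_prod_beta)
  qed
  have diffC: "(\<Sum>(p,q)\<in>D1. q - p) - (\<Sum>(p,q)\<in>D2. q - p) = (\<Sum>I\<in>D1. \<Sum>K\<in>G I. Henstock_Kurzweil_Integration.content K)"
  proof -
    have "(\<Sum>(p,q)\<in>D1. q - p) = (\<Sum>I\<in>D1. snd I - fst I)" by (simp add: case_prod_beta)
    also have "\<dots> = (\<Sum>I\<in>D1. (\<Sum>J\<in>S I. snd J - fst J) + (\<Sum>K\<in>G I. Henstock_Kurzweil_Integration.content K))"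
      using eqC by (rule sum.cong[OF refl])
    also have "\<dots> = (\<Sum>J\<in>D2. snd J - fst J) + (\<Sum>I\<in>D1. \<Sum>K\<in>G I. Henstock_Kurzweil_Integration.content K)"
      by (simp add: sum.distrib sumD2)
    finally show ?thesis by (simp add: case_prod_beta)
  qed
  \<comment> \<open>apply absolute continuity to the gaps\<close>
  define X where "X = Sigma D1 G"
  define \<alpha> where "\<alpha> x = Inf (snd x)" for x :: "(real \<times> real) \<times> real set"
  define \<beta> where "\<beta> x = Sup (snd x)" for x :: "(real \<times> real) \<times> real set"
  have Xfin: "finite X" unfolding X_def using fin1 Gfin by simp
  have Gel: "I \<in> D1 \<Longrightarrow> K \<in> G I \<Longrightarrow> fst I \<le> Inf K \<and> Inf K < Sup K \<and> Sup K \<le> snd I \<and> Henstock_Kurzweil_Integration.content K = Sup K - Inf K" for I K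
  proof -
    assume a: "I \<in> D1" "K \<in> G I"
    then have K: "K \<in> Q I" "Henstock_Kurzweil_Integration.content K > 0" unfolding G_def by auto
    obtain u v where uv: "K = cbox u v" "K \<noteq> {}" "K \<subseteq> cbox (fst I) (snd I)" using Qel[OF a(1) K(1)] by blast
    note cp = cbox_props[OF uv(1,2)]
    have "u < v" using K(2) cp by simp
    then have "fst I \<le> u" "v \<le> snd I" using uv(1,3) by auto
    then show ?thesis using cp \<open>u < v\<close> by simp
  qed
  have c1: "\<forall>i\<in>X. lo \<le> \<alpha> i \<and> \<alpha> i \<le> \<beta> i \<and> \<beta> i \<le> hi"
  proof
    fix i assume "i \<in> X"
    then have i: "fst i \<in> D1" "snd i \<in> G (fst i)" unfolding X_def by auto
    have "lo \<le> fst (fst i)" "snd (fst i) \<le> hi" using D1b[of "fst (fst i)" "snd (fst i)"] i(1) by auto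
    then show "lo \<le> \<alpha> i \<and> \<alpha> i \<le> \<beta> i \<and> \<beta> i \<le> hi" using Gel[OF i] unfolding \<alpha>_def \<beta>_def by auto
  qed
  have c2: "\<forall>i\<in>X. \<forall>j\<in>X. i \<noteq> j \<longrightarrow> \<beta> i \<le> \<alpha> j \<or> \<beta> j \<le> \<alpha> i"
  proof (intro ballI impI)
    fix i j assume ij: "i \<in> X" "j \<in> X" "i \<noteq> j"
    then have i: "fst i \<in> D1" "snd i \<in> G (fst i)" and j: "fst j \<in> D1" "snd j \<in> G (fst j)"
      unfolding X_def by auto
    note gi = Gel[OF i] and gj = Gel[OF j]
    show "\<beta> i \<le> \<alpha> j \<or> \<beta> j \<le> \<alpha> i"
    proof (cases "fst i = fst j")
      case False
      then have "snd (fst i) < fst (fst j) \<or> snd (fst j) < fst (fst i)" using D1disj i(1) j(1) by blast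
      then show ?thesis using gi gj unfolding \<alpha>_def \<beta>_def by auto
    next
      case True
      then have "snd i \<noteq> snd j" using ij(3) by (metis prod.collapse)
      moreover have "snd i \<in> Q (fst i)" "snd j \<in> Q (fst i)" using i j True unfolding G_def by auto
      ultimately have int: "interior (snd i) \<inter> interior (snd j) = {}" using Q(2)[OF i(1)] division_ofD(5) by metis
      obtain u v where uv: "snd i = cbox u v" "snd i \<noteq> {}" using Qel[OF i(1) \<open>snd i \<in> Q (fst i)\<close>] by blast
      obtain u' v' where uv': "snd j = cbox u' v'" "snd j \<noteq> {}" using Qel[OF i(1) \<open>snd j \<in> Q (fst i)\<close>] by blast
      have "Inf (snd i) = u" "Sup (snd i) = v" "Inf (snd j) = u'" "Sup (snd j) = v'"
        using cbox_props[OF uv(1,2)] cbox_props[OF uv'(1,2)] by auto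
      moreover have "u < v" "u' < v'" using gi gj calculation by auto
      moreover have "{u<..<v} \<inter> {u'<..<v'} = {}" using int uv(1) uv'(1) by simp
      ultimately show ?thesis unfolding \<alpha>_def \<beta>_def
      proof -
        assume h: "Inf (snd i) = u" "Sup (snd i) = v" "Inf (snd j) = u'" "Sup (snd j) = v'"
          "u < v" "u' < v'" "{u<..<v} \<inter> {u'<..<v'} = {}"
        show "Sup (snd i) \<le> Inf (snd j) \<or> Sup (snd j) \<le> Inf (snd i)"
        proof (rule ccontr)
          assume "\<not> ?thesis"
          then have "u' < v" "u < v'" using h by auto
          then have "(max u u' + min v v')/2 \<in> {u<..<v} \<inter> {u'<..<v'}" using h(5,6) by auto
          then show False using h(7) by blast
        qed
      qed
    qed
  qed
  have sumX: "(\<Sum>x\<in>X. g x) = (\<Sum>I\<in>D1. \<Sum>K\<in>G I. g (I,K))" for g :: "(real \<times> real) \<times> real set \<Rightarrow> real"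
    unfolding X_def using fin1 Gfin by (simp add: sum.Sigma)
  have c3: "(\<Sum>i\<in>X. \<beta> i - \<alpha> i) < \<delta>"
  proof -
    have "(\<Sum>i\<in>X. \<beta> i - \<alpha> i) = (\<Sum>I\<in>D1. \<Sum>K\<in>G I. Sup K - Inf K)" unfolding sumX \<alpha>_def \<beta>_def by simp
    also have "\<dots> = (\<Sum>I\<in>D1. \<Sum>K\<in>G I. Henstock_Kurzweil_Integration.content K)"
      by (intro sum.cong refl) (use Gel in auto)
    finally show ?thesis using diffC small by simp
  qed
  have L1: "(\<Sum>i\<in>X. \<bar>F (\<beta> i) - F (\<alpha> i)\<bar>) < \<epsilon>" by (rule AC[OF Xfin c1 c2 c3])
  have L2: "\<bar>(\<Sum>I\<in>D1. \<Sum>K\<in>G I. F (Sup K) - F (Inf K))\<bar> \<le> (\<Sum>i\<in>X. \<bar>F (\<beta> i) - F (\<alpha> i)\<bar>)"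
  proof -
    have "(\<Sum>I\<in>D1. \<Sum>K\<in>G I. F (Sup K) - F (Inf K)) = (\<Sum>i\<in>X. F (\<beta> i) - F (\<alpha> i))"
      unfolding sumX \<alpha>_def \<beta>_def by simp
    then show ?thesis using sum_abs[of "\<lambda>i. F (\<beta> i) - F (\<alpha> i)" X] by (simp only:)
  qed
  show ?thesis unfolding diffF by (rule le_less_trans[OF L2 L1])
qed

lemma gap:
  fixes F :: "real \<Rightarrow> real"
  assumes ac: "abs_continuous_on lo hi F" and e: "\<epsilon> > 0"
  obtains \<delta> where "\<delta> > 0" "\<And>D1 D2. finite D1 \<Longrightarrow> finite D2 \<Longrightarrow>
      (\<And>p q. (p,q) \<in> D1 \<Longrightarrow> lo \<le> p \<and> p < q \<and> q \<le> hi) \<Longrightarrow>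
      (\<And>p q p' q'. (p,q) \<in> D1 \<Longrightarrow> (p',q') \<in> D1 \<Longrightarrow> (p,q) \<noteq> (p',q') \<Longrightarrow> q < p' \<or> q' < p) \<Longrightarrow>
      (\<And>p q p' q'. (p,q) \<in> D2 \<Longrightarrow> (p',q') \<in> D2 \<Longrightarrow> (p,q) \<noteq> (p',q') \<Longrightarrow> q < p' \<or> q' < p) \<Longrightarrow>
      (\<And>p q. (p,q) \<in> D2 \<Longrightarrow> p < q \<and> (\<exists>p' q'. (p',q') \<in> D1 \<and> p' \<le> p \<and> q \<le> q')) \<Longrightarrow>
      (\<Sum>(p,q)\<in>D1. q - p) - (\<Sum>(p,q)\<in>D2. q - p) < \<delta> \<Longrightarrow>
      \<bar>(\<Sum>(p,q)\<in>D1. F q - F p) - (\<Sum>(p,q)\<in>D2. F q - F p)\<bar> < \<epsilon>"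
proof -
  obtain \<delta> where d: "\<delta> > 0" and H: "\<And>(X::((real\<times>real)\<times>real set) set) \<alpha> \<beta>. finite X \<Longrightarrow> (\<forall>i\<in>X. lo \<le> \<alpha> i \<and> \<alpha> i \<le> \<beta> i \<and> \<beta> i \<le> hi) \<Longrightarrow>
     (\<forall>i\<in>X. \<forall>j\<in>X. i \<noteq> j \<longrightarrow> \<beta> i \<le> \<alpha> j \<or> \<beta> j \<le> \<alpha> i) \<Longrightarrow>
     (\<Sum>i\<in>X. \<beta> i - \<alpha> i) < \<delta> \<Longrightarrow> (\<Sum>i\<in>X. \<bar>F (\<beta> i) - F (\<alpha> i)\<bar>) < \<epsilon>"
  proof (rule ac_index[where 'i="(real\<times>real)\<times>real set", OF ac e])
    fix \<delta> assume a: "\<delta> > 0" and b: "\<And>(X::((real\<times>real)\<times>real set) set) \<alpha> \<beta>. finite X \<Longrightarrow> (\<forall>i\<in>X. lo \<le> \<alpha> i \<and> \<alpha> i \<le> \<beta> i \<and> \<beta> i \<le> hi) \<Longrightarrow>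
     (\<forall>i\<in>X. \<forall>j\<in>X. i \<noteq> j \<longrightarrow> \<beta> i \<le> \<alpha> j \<or> \<beta> j \<le> \<alpha> i) \<Longrightarrow>
     (\<Sum>i\<in>X. \<beta> i - \<alpha> i) < \<delta> \<Longrightarrow> (\<Sum>i\<in>X. \<bar>F (\<beta> i) - F (\<alpha> i)\<bar>) < \<epsilon>"
    show thesis by (rule that[OF a b])
  qed
  show ?thesis
    by (rule that[OF d]) (rule gap_main[OF H], assumption+)
qed

lemma len_sum_le:
  fixes D :: "(real \<times> real) set" and V :: "real set"
  assumes fin: "finite D" and sub: "\<And>p q. (p,q) \<in> D \<Longrightarrow> p < q \<and> {p..q} \<subseteq> V"
    and dj: "\<And>p q p' q'. (p,q) \<in> D \<Longrightarrow> (p',q') \<in> D \<Longrightarrow> (p,q) \<noteq> (p',q') \<Longrightarrow> q < p' \<or> q' < p"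
    and V: "V \<in> lmeasurable"
  shows "(\<Sum>(p,q)\<in>D. q - p) \<le> measure lebesgue V"
proof -
  define f where "f J = {fst J .. snd J}" for J :: "real \<times> real"
  have "measure lebesgue (\<Union>(f ` D)) = (\<Sum>J\<in>D. measure lebesgue (f J))"
  proof (rule measure_negligible_finite_Union_image[OF fin])
    show "f J \<in> lmeasurable" if "J \<in> D" for J unfolding f_def by simp
    show "pairwise (\<lambda>J J'. negligible (f J \<inter> f J')) D"
    proof (rule pairwiseI)
      fix J J' assume J: "J \<in> D" "J' \<in> D" "J \<noteq> J'"
      then have "snd J < fst J' \<or> snd J' < fst J" using dj[of "fst J" "snd J" "fst J'" "snd J'"] by simp
      then have "f J \<inter> f J' = {}" unfolding f_def by auto
      then show "negligible (f J \<inter> f J')" by simp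
    qed
  qed
  also have "\<dots> = (\<Sum>(p,q)\<in>D. q - p)"
  proof (rule sum.cong)
    fix J assume "J \<in> D"
    then have "fst J < snd J" using sub[of "fst J" "snd J"] by simp
    then show "measure lebesgue (f J) = (case J of (p,q) \<Rightarrow> q - p)" unfolding f_def by (simp add: case_prod_beta)
  qed simp
  finally have eq: "measure lebesgue (\<Union>(f ` D)) = (\<Sum>(p,q)\<in>D. q - p)" .
  have "measure lebesgue (\<Union>(f ` D)) \<le> measure lebesgue V"
  proof (rule measure_mono_fmeasurable)
    show "\<Union>(f ` D) \<in> sets lebesgue" using fin unfolding f_def by (intro sets.finite_UN) auto
    show "\<Union>(f ` D) \<subseteq> V" using sub unfolding f_def by force
    show "V \<in> fmeasurable lebesgue" using V .
  qed
  then show ?thesis using eq by simp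
qed

lemma measure_open_intervals:
  fixes D :: "(real \<times> real) set"
  assumes fin: "finite D" and lt: "\<And>p q. (p,q) \<in> D \<Longrightarrow> p < q"
    and dj: "\<And>p q p' q'. (p,q) \<in> D \<Longrightarrow> (p',q') \<in> D \<Longrightarrow> (p,q) \<noteq> (p',q') \<Longrightarrow> q < p' \<or> q' < p"
  shows "measure lebesgue (\<Union>(p,q)\<in>D. {p<..<q}) = (\<Sum>(p,q)\<in>D. q - p)"
    "(\<Union>(p,q)\<in>D. {p<..<q}) \<in> lmeasurable"
proof -
  define f where "f J = {fst J <..< snd J}" for J :: "real \<times> real"
  have U: "(\<Union>(p,q)\<in>D. {p<..<q}) = \<Union>(f ` D)" unfolding f_def by (auto simp: case_prod_beta)
  have "measure lebesgue (\<Union>(f ` D)) = (\<Sum>J\<in>D. measure lebesgue (f J))"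
  proof (rule measure_negligible_finite_Union_image[OF fin])
    show "f J \<in> lmeasurable" if "J \<in> D" for J unfolding f_def by simp
    show "pairwise (\<lambda>J J'. negligible (f J \<inter> f J')) D"
    proof (rule pairwiseI)
      fix J J' assume J: "J \<in> D" "J' \<in> D" "J \<noteq> J'"
      then have "snd J < fst J' \<or> snd J' < fst J" using dj[of "fst J" "snd J" "fst J'" "snd J'"] by simp
      then have "f J \<inter> f J' = {}" unfolding f_def by auto
      then show "negligible (f J \<inter> f J')" by simp
    qed
  qed
  also have "\<dots> = (\<Sum>(p,q)\<in>D. q - p)"
  proof (rule sum.cong)
    fix J assume "J \<in> D"
    then have "fst J < snd J" using lt[of "fst J" "snd J"] by simp
    then show "measure lebesgue (f J) = (case J of (p,q) \<Rightarrow> q - p)" unfolding f_def by (simp add: case_prod_beta)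
  qed simp
  finally show "measure lebesgue (\<Union>(p,q)\<in>D. {p<..<q}) = (\<Sum>(p,q)\<in>D. q - p)" unfolding U .
  show "(\<Union>(p,q)\<in>D. {p<..<q}) \<in> lmeasurable" unfolding U f_def using fin
    by (intro fmeasurable.finite_UN) auto
qed

lemma om_cover:
  fixes D :: "(real \<times> real) set"
  assumes fin: "finite D" and lt: "\<And>p q. (p,q) \<in> D \<Longrightarrow> p < q"
    and S0: "S \<subseteq> T0" "T0 \<in> lmeasurable"
    and ST: "S - (\<Union>(p,q)\<in>D. {p<..<q}) \<subseteq> T" and T: "T \<in> lmeasurable"
  shows "om S \<le> (\<Sum>(p,q)\<in>D. q - p) + measure lebesgue T"
proof -
  define f where "f J = {fst J .. snd J}" for J :: "real \<times> real"
  have fl: "f J \<in> lmeasurable" for J unfolding f_def by simp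
  have UDl: "\<Union>(f ` D) \<in> lmeasurable" using fin fl by (intro fmeasurable.finite_UN) auto
  have sub: "S \<subseteq> \<Union>(f ` D) \<union> T"
  proof
    fix x assume x: "x \<in> S"
    show "x \<in> \<Union>(f ` D) \<union> T"
    proof (cases "x \<in> (\<Union>(p,q)\<in>D. {p<..<q})")
      case True
      then obtain p q where "(p,q) \<in> D" "x \<in> {p<..<q}" by blast
      then have "x \<in> f (p,q)" unfolding f_def by simp
      then show ?thesis using \<open>(p,q) \<in> D\<close> by blast
    next
      case False then show ?thesis using x ST by blast
    qed
  qed
  have "om S \<le> measure lebesgue (\<Union>(f ` D) \<union> T)"
    by (rule om_le[OF fmeasurable.Un[OF UDl T] sub])
  also have "\<dots> \<le> measure lebesgue (\<Union>(f ` D)) + measure lebesgue T"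
    using UDl T by (intro measure_Un_le fmeasurableD)
  also have "measure lebesgue (\<Union>(f ` D)) \<le> (\<Sum>J\<in>D. measure lebesgue (f J))"
    using fin fl by (intro measure_UNION_le) auto
  also have "(\<Sum>J\<in>D. measure lebesgue (f J)) = (\<Sum>(p,q)\<in>D. q - p)"
  proof (rule sum.cong)
    fix J assume "J \<in> D"
    then have "fst J < snd J" using lt[of "fst J" "snd J"] by simp
    then show "measure lebesgue (f J) = (case J of (p,q) \<Rightarrow> q - p)" unfolding f_def by (simp add: case_prod_beta)
  qed simp
  finally show ?thesis by simp
qed

lemma ac_pairs:
  fixes F :: "real \<Rightarrow> real"
  assumes ac: "abs_continuous_on lo hi F" and e: "\<epsilon> > 0"
  obtains \<delta> where "\<delta> > 0" "\<And>D. finite D \<Longrightarrow> (\<And>p q. (p,q) \<in> D \<Longrightarrow> lo \<le> p \<and> p < q \<and> q \<le> hi) \<Longrightarrow>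
      (\<And>p q p' q'. (p,q) \<in> D \<Longrightarrow> (p',q') \<in> D \<Longrightarrow> (p,q) \<noteq> (p',q') \<Longrightarrow> q < p' \<or> q' < p) \<Longrightarrow>
      (\<Sum>(p,q)\<in>D. q - p) < \<delta> \<Longrightarrow> (\<Sum>(p,q)\<in>D. \<bar>F q - F p\<bar>) < \<epsilon>"
proof -
  obtain \<delta> where d: "\<delta> > 0" and H: "\<And>(X::(real\<times>real) set) \<alpha> \<beta>. finite X \<Longrightarrow> (\<forall>i\<in>X. lo \<le> \<alpha> i \<and> \<alpha> i \<le> \<beta> i \<and> \<beta> i \<le> hi) \<Longrightarrow>
     (\<forall>i\<in>X. \<forall>j\<in>X. i \<noteq> j \<longrightarrow> \<beta> i \<le> \<alpha> j \<or> \<beta> j \<le> \<alpha> i) \<Longrightarrow>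
     (\<Sum>i\<in>X. \<beta> i - \<alpha> i) < \<delta> \<Longrightarrow> (\<Sum>i\<in>X. \<bar>F (\<beta> i) - F (\<alpha> i)\<bar>) < \<epsilon>"
  proof (rule ac_index[where 'i="real\<times>real", OF ac e])
    fix \<delta> assume a: "\<delta> > 0" and b: "\<And>(X::(real\<times>real) set) \<alpha> \<beta>. finite X \<Longrightarrow> (\<forall>i\<in>X. lo \<le> \<alpha> i \<and> \<alpha> i \<le> \<beta> i \<and> \<beta> i \<le> hi) \<Longrightarrow>
     (\<forall>i\<in>X. \<forall>j\<in>X. i \<noteq> j \<longrightarrow> \<beta> i \<le> \<alpha> j \<or> \<beta> j \<le> \<alpha> i) \<Longrightarrow>
     (\<Sum>i\<in>X. \<beta> i - \<alpha> i) < \<delta> \<Longrightarrow> (\<Sum>i\<in>X. \<bar>F (\<beta> i) - F (\<alpha> i)\<bar>) < \<epsilon>"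
    show thesis by (rule that[OF a b])
  qed
  show ?thesis
  proof (rule that[OF d])
    fix D :: "(real \<times> real) set"
    assume fin: "finite D" and b: "\<And>p q. (p,q) \<in> D \<Longrightarrow> lo \<le> p \<and> p < q \<and> q \<le> hi"
      and dj: "\<And>p q p' q'. (p,q) \<in> D \<Longrightarrow> (p',q') \<in> D \<Longrightarrow> (p,q) \<noteq> (p',q') \<Longrightarrow> q < p' \<or> q' < p"
      and s: "(\<Sum>(p,q)\<in>D. q - p) < \<delta>"
    have c1: "\<forall>i\<in>D. lo \<le> fst i \<and> fst i \<le> snd i \<and> snd i \<le> hi"
      using b by (metis less_imp_le prod.collapse)
    have c2: "\<forall>i\<in>D. \<forall>j\<in>D. i \<noteq> j \<longrightarrow> snd i \<le> fst j \<or> snd j \<le> fst i"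
      using dj by (metis less_imp_le prod.collapse)
    have c3: "(\<Sum>i\<in>D. snd i - fst i) < \<delta>" using s by (simp add: case_prod_beta)
    have "(\<Sum>i\<in>D. \<bar>F (snd i) - F (fst i)\<bar>) < \<epsilon>" by (rule H[OF fin c1 c2 c3])
    then show "(\<Sum>(p,q)\<in>D. \<bar>F q - F p\<bar>) < \<epsilon>" by (simp add: case_prod_beta)
  qed
qed

lemma unb_negligible:
  fixes F :: "real \<Rightarrow> real"
  assumes ac: "abs_continuous_on a b F"
  shows "negligible {x \<in> {a<..<b}. \<forall>M>0. \<forall>d>0. \<exists>p q. p \<le> x \<and> x \<le> q \<and> p < q \<and> q - p < d \<and> M * (q - p) < \<bar>F q - F p\<bar>}"
    (is "negligible ?S")
proof -
  obtain \<delta> where d: "\<delta> > 0" and H: "\<And>D. finite D \<Longrightarrow> (\<And>p q. (p,q) \<in> D \<Longrightarrow> a \<le> p \<and> p < q \<and> q \<le> b) \<Longrightarrow>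
      (\<And>p q p' q'. (p,q) \<in> D \<Longrightarrow> (p',q') \<in> D \<Longrightarrow> (p,q) \<noteq> (p',q') \<Longrightarrow> q < p' \<or> q' < p) \<Longrightarrow>
      (\<Sum>(p,q)\<in>D. q - p) < \<delta> \<Longrightarrow> (\<Sum>(p,q)\<in>D. \<bar>F q - F p\<bar>) < 1"
  proof (rule ac_pairs[OF ac zero_less_one])
    fix \<delta> :: real assume a: "\<delta> > 0" and b: "\<And>D. finite D \<Longrightarrow> (\<And>p q. (p,q) \<in> D \<Longrightarrow> a \<le> p \<and> p < q \<and> q \<le> b) \<Longrightarrow>
      (\<And>p q p' q'. (p,q) \<in> D \<Longrightarrow> (p',q') \<in> D \<Longrightarrow> (p,q) \<noteq> (p',q') \<Longrightarrow> q < p' \<or> q' < p) \<Longrightarrow>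
      (\<Sum>(p,q)\<in>D. q - p) < \<delta> \<Longrightarrow> (\<Sum>(p,q)\<in>D. \<bar>F q - F p\<bar>) < 1"
    show thesis by (rule that[OF a b])
  qed
  have loc: "negligible (?S \<inter> ball x0 (\<delta>/4))" for x0
  proof -
    define V where "V = ball x0 (\<delta>/4) \<inter> {a<..<b}"
    define E where "E = ?S \<inter> ball x0 (\<delta>/4)"
    have Vo: "open V" unfolding V_def by (intro open_Int) auto
    have Vb: "bounded V" unfolding V_def by (intro bounded_Int) auto
    have Vl: "V \<in> lmeasurable" using Vo Vb by (simp add: lmeasurable_open)
    have EV: "E \<subseteq> V" unfolding E_def V_def by blast
    have mV: "measure lebesgue V \<le> \<delta>/2"
    proof -
      have "measure lebesgue V \<le> measure lebesgue (ball x0 (\<delta>/4))"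
        unfolding V_def by (intro measure_mono_fmeasurable) auto
      also have "\<dots> = \<delta>/2" using d by (simp add: ball_eq_greaterThanLessThan)
      finally show ?thesis .
    qed
    show "negligible (?S \<inter> ball x0 (\<delta>/4))" unfolding E_def[symmetric]
    proof (rule om_negligible[OF EV Vl])
      show "om E \<le> 0"
      proof (rule field_le_epsilon)
        fix e :: real assume e: "e > 0"
        define M where "M = 2/e"
        have M: "M > 0" unfolding M_def using e by simp
        have Hyp: "\<exists>p q. p \<le> x \<and> x \<le> q \<and> p < q \<and> q - p < dd \<and> M * (q - p) < \<bar>F q - F p\<bar>"
          if "x \<in> E" "dd > 0" for x dd
          using that M unfolding E_def by blast
        have e2: "e/2 > 0" using e by simp
        obtain D T where D: "finite D" "\<And>p q. (p,q) \<in> D \<Longrightarrow> p < q \<and> {p..q} \<subseteq> V \<and> M * (q - p) < \<bar>F q - F p\<bar>"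
          "\<And>p q p' q'. (p,q) \<in> D \<Longrightarrow> (p',q') \<in> D \<Longrightarrow> (p,q) \<noteq> (p',q') \<Longrightarrow> q < p' \<or> q' < p"
          and T: "T \<in> lmeasurable" "E - (\<Union>(p,q)\<in>D. {p<..<q}) \<subseteq> T" "measure lebesgue T \<le> e/2"
          using vit[OF Vo Vb EV Hyp e2] by blast
        have L: "(\<Sum>(p,q)\<in>D. q - p) \<le> measure lebesgue V"
          using D by (intro len_sum_le[OF D(1) _ _ Vl]) auto
        have Db: "a \<le> p \<and> p < q \<and> q \<le> b" if "(p,q) \<in> D" for p q
        proof -
          have "p < q" "{p..q} \<subseteq> V" using D(2)[OF that] by auto
          then have "p \<in> V" "q \<in> V" by auto
          then show ?thesis using \<open>p < q\<close> unfolding V_def by auto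
        qed
        have A1: "(\<Sum>(p,q)\<in>D. \<bar>F q - F p\<bar>) < 1"
          using L mV d by (intro H[OF D(1) Db D(3)]) auto
        have "M * (\<Sum>(p,q)\<in>D. q - p) = (\<Sum>(p,q)\<in>D. M * (q - p))"
          by (simp add: sum_distrib_left case_prod_beta)
        also have "\<dots> \<le> (\<Sum>(p,q)\<in>D. \<bar>F q - F p\<bar>)"
          using D(2) by (intro sum_mono) (auto simp: case_prod_beta less_imp_le)
        finally have "M * (\<Sum>(p,q)\<in>D. q - p) < 1" using A1 by linarith
        then have L2: "(\<Sum>(p,q)\<in>D. q - p) < e/2" unfolding M_def using e by (simp add: field_simps)
        have "om E \<le> (\<Sum>(p,q)\<in>D. q - p) + measure lebesgue T"
          using D by (intro om_cover[OF D(1) _ EV Vl T(2) T(1)]) auto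
        then show "om E \<le> 0 + e" using L2 T(3) by linarith
      qed
    qed
  qed
  show ?thesis
  proof (subst locally_negligible_alt, intro ballI)
    fix x assume "x \<in> ?S"
    show "\<exists>U. openin (top_of_set ?S) U \<and> x \<in> U \<and> negligible U"
    proof (intro exI conjI)
      show "openin (top_of_set ?S) (?S \<inter> ball x (\<delta>/4))" by (rule openin_open_Int) simp
      show "x \<in> ?S \<inter> ball x (\<delta>/4)" using \<open>x \<in> ?S\<close> d by simp
      show "negligible (?S \<inter> ball x (\<delta>/4))" by (rule loc)
    qed
  qed
qed

lemma roy_negligible:
  fixes F :: "real \<Rightarrow> real"
  assumes ac: "abs_continuous_on a b F" and rs: "r < s"
  shows "negligible {x \<in> {a<..<b}. (\<forall>d>0. \<exists>p q. p \<le> x \<and> x \<le> q \<and> p < q \<and> q - p < d \<and> F q - F p < r * (q - p))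
            \<and> (\<forall>d>0. \<exists>p q. p \<le> x \<and> x \<le> q \<and> p < q \<and> q - p < d \<and> s * (q - p) < F q - F p)}"
    (is "negligible ?E")
proof -
  have EV: "?E \<subseteq> {a<..<b}" by blast
  have V0l: "{a<..<b} \<in> lmeasurable" by simp
  define m where "m = om ?E"
  have m0: "m \<ge> 0" unfolding m_def by (rule om_nonneg[OF EV V0l])
  have "m \<le> 0"
  proof (rule field_le_epsilon)
    fix z :: real assume z: "z > 0"
    define e' where "e' = (s - r) * z / 2"
    have e': "e' > 0" unfolding e'_def using rs z by simp
    obtain \<delta> where d: "\<delta> > 0" and G: "\<And>D1 D2. finite D1 \<Longrightarrow> finite D2 \<Longrightarrow>
      (\<And>p q. (p,q) \<in> D1 \<Longrightarrow> a \<le> p \<and> p < q \<and> q \<le> b) \<Longrightarrow>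
      (\<And>p q p' q'. (p,q) \<in> D1 \<Longrightarrow> (p',q') \<in> D1 \<Longrightarrow> (p,q) \<noteq> (p',q') \<Longrightarrow> q < p' \<or> q' < p) \<Longrightarrow>
      (\<And>p q p' q'. (p,q) \<in> D2 \<Longrightarrow> (p',q') \<in> D2 \<Longrightarrow> (p,q) \<noteq> (p',q') \<Longrightarrow> q < p' \<or> q' < p) \<Longrightarrow>
      (\<And>p q. (p,q) \<in> D2 \<Longrightarrow> p < q \<and> (\<exists>p' q'. (p',q') \<in> D1 \<and> p' \<le> p \<and> q \<le> q')) \<Longrightarrow>
      (\<Sum>(p,q)\<in>D1. q - p) - (\<Sum>(p,q)\<in>D2. q - p) < \<delta> \<Longrightarrow>
      \<bar>(\<Sum>(p,q)\<in>D1. F q - F p) - (\<Sum>(p,q)\<in>D2. F q - F p)\<bar> < e'"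
      using gap[OF ac e'] by blast
    define K where "K = 4 * \<bar>r\<bar> + 2 * (s - r) + 1"
    have K: "K > 0" unfolding K_def using rs by simp
    define c where "c = (s - r) * z / (2 * K)"
    have c: "c > 0" unfolding c_def using rs z K by simp
    have cK: "c * K = (s - r) * z / 2" unfolding c_def using K by (simp add: field_simps)
    define \<epsilon> where "\<epsilon> = min (\<delta>/5) c"
    have \<epsilon>: "\<epsilon> > 0" unfolding \<epsilon>_def using d c by simp
    have \<epsilon>d: "\<epsilon> \<le> \<delta>/5" "\<epsilon> \<le> c" unfolding \<epsilon>_def by simp_all
    obtain T where T: "T \<in> lmeasurable" "?E \<subseteq> T" "measure lebesgue T < om ?E + \<epsilon>"
      using om_approx[OF EV V0l \<epsilon>] by blast
    obtain W where W: "open W" "T \<subseteq> W" "(W - T) \<in> lmeasurable" "emeasure lebesgue (W - T) < ennreal \<epsilon>"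
      using sets_lebesgue_outer_open[OF fmeasurableD[OF T(1)] \<epsilon>] by blast
    have mWT: "measure lebesgue (W - T) < \<epsilon>"
      using W(4) emeasure_eq_measure2[OF W(3)] \<epsilon> by (simp add: ennreal_less_iff)
    define U where "U = W \<inter> {a<..<b}"
    have Uo: "open U" unfolding U_def using W(1) by (intro open_Int) auto
    have Ub: "bounded U" unfolding U_def by (intro bounded_Int) auto
    have Ul: "U \<in> lmeasurable" using Uo Ub by (simp add: lmeasurable_open)
    have EU: "?E \<subseteq> U" unfolding U_def using T(2) W(2) by blast
    have mU: "measure lebesgue U < m + 2 * \<epsilon>"
    proof -
      have "U \<subseteq> T \<union> (W - T)" unfolding U_def by blast
      then have "measure lebesgue U \<le> measure lebesgue (T \<union> (W - T))"
        using T(1) W(3) by (intro measure_mono_fmeasurable fmeasurableD[OF Ul] fmeasurable.Un) auto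
      also have "\<dots> \<le> measure lebesgue T + measure lebesgue (W - T)"
        using T(1) W(3) by (intro measure_Un_le fmeasurableD)
      finally show ?thesis using T(3) mWT unfolding m_def by linarith
    qed
    have Hyp1: "\<exists>p q. p \<le> x \<and> x \<le> q \<and> p < q \<and> q - p < dd \<and> F q - F p < r * (q - p)"
      if "x \<in> ?E" "dd > 0" for x dd using that by blast
    obtain D1 T1 where D1: "finite D1" "\<And>p q. (p,q) \<in> D1 \<Longrightarrow> p < q \<and> {p..q} \<subseteq> U \<and> F q - F p < r * (q - p)"
      "\<And>p q p' q'. (p,q) \<in> D1 \<Longrightarrow> (p',q') \<in> D1 \<Longrightarrow> (p,q) \<noteq> (p',q') \<Longrightarrow> q < p' \<or> q' < p"
      and T1: "T1 \<in> lmeasurable" "?E - (\<Union>(p,q)\<in>D1. {p<..<q}) \<subseteq> T1" "measure lebesgue T1 \<le> \<epsilon>"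
      using vit[OF Uo Ub EU Hyp1 \<epsilon>] by blast
    define U' where "U' = (\<Union>(p,q)\<in>D1. {p<..<q})"
    have D1lt: "\<And>p q. (p,q) \<in> D1 \<Longrightarrow> p < q" using D1(2) by blast
    note mo1 = measure_open_intervals[OF D1(1) D1lt D1(3)]
    have U'o: "open U'" unfolding U'_def by (auto intro!: open_UN)
    have U'sub: "U' \<subseteq> U" unfolding U'_def using D1(2) by fastforce
    have U'b: "bounded U'" using bounded_subset[OF Ub U'sub] .
    have U'l: "U' \<in> lmeasurable" unfolding U'_def by (rule mo1(2))
    have mU': "measure lebesgue U' = (\<Sum>(p,q)\<in>D1. q - p)" unfolding U'_def by (rule mo1(1))
    define E' where "E' = ?E \<inter> U'"
    have E'U': "E' \<subseteq> U'" unfolding E'_def by blast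
    have E'V: "E' \<subseteq> {a<..<b}" unfolding E'_def by blast
    have Hyp2: "\<exists>p q. p \<le> x \<and> x \<le> q \<and> p < q \<and> q - p < dd \<and>
                 (s * (q - p) < F q - F p \<and> (\<exists>p' q'. (p',q') \<in> D1 \<and> p' \<le> p \<and> q \<le> q'))"
      if x: "x \<in> E'" and dd: "dd > 0" for x dd
    proof -
      obtain p1 q1 where pq1: "(p1,q1) \<in> D1" "p1 < x" "x < q1" using x unfolding E'_def U'_def by auto
      define d' where "d' = min dd (min (x - p1) (q1 - x))"
      have d': "d' > 0" unfolding d'_def using dd pq1 by simp
      have "x \<in> ?E" using x unfolding E'_def by blast
      then obtain p q where pq: "p \<le> x" "x \<le> q" "p < q" "q - p < d'" "s * (q - p) < F q - F p"
        using d' by blast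
      have "p1 \<le> p" "q \<le> q1" using pq unfolding d'_def by auto
      moreover have "q - p < dd" using pq unfolding d'_def by auto
      ultimately show ?thesis using pq pq1 by blast
    qed
    obtain D2 T2 where D2: "finite D2" "\<And>p q. (p,q) \<in> D2 \<Longrightarrow> p < q \<and> {p..q} \<subseteq> U' \<and>
          (s * (q - p) < F q - F p \<and> (\<exists>p' q'. (p',q') \<in> D1 \<and> p' \<le> p \<and> q \<le> q'))"
      "\<And>p q p' q'. (p,q) \<in> D2 \<Longrightarrow> (p',q') \<in> D2 \<Longrightarrow> (p,q) \<noteq> (p',q') \<Longrightarrow> q < p' \<or> q' < p"
      and T2: "T2 \<in> lmeasurable" "E' - (\<Union>(p,q)\<in>D2. {p<..<q}) \<subseteq> T2" "measure lebesgue T2 \<le> \<epsilon>"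
      using vit[OF U'o U'b E'U' Hyp2 \<epsilon>] by blast
    define L1 where "L1 = (\<Sum>(p,q)\<in>D1. q - p)"
    define L2 where "L2 = (\<Sum>(p,q)\<in>D2. q - p)"
    define S1 where "S1 = (\<Sum>(p,q)\<in>D1. F q - F p)"
    define S2 where "S2 = (\<Sum>(p,q)\<in>D2. F q - F p)"
    have D2lt: "\<And>p q. (p,q) \<in> D2 \<Longrightarrow> p < q" using D2(2) by blast
    have A: "m \<le> om E' + measure lebesgue T1"
      unfolding m_def E'_def using om_split[OF EV V0l _ T1(1)] T1(2) unfolding U'_def by blast
    have B: "om E' \<le> L2 + measure lebesgue T2"
      unfolding L2_def by (rule om_cover[OF D2(1) D2lt E'V V0l T2(2) T2(1)])
    have C: "L1 \<le> measure lebesgue U"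
      unfolding L1_def using D1 by (intro len_sum_le[OF D1(1) _ D1(3) Ul]) auto
    have Dd: "L2 \<le> L1"
    proof -
      have "L2 \<le> measure lebesgue U'"
        unfolding L2_def using D2 by (intro len_sum_le[OF D2(1) _ D2(3) U'l]) auto
      then show ?thesis unfolding mU' L1_def .
    qed
    have Ee: "S1 \<le> r * L1"
    proof -
      have "S1 \<le> (\<Sum>(p,q)\<in>D1. r * (q - p))"
        unfolding S1_def using D1(2) by (intro sum_mono) (auto simp: case_prod_beta less_imp_le)
      also have "\<dots> = r * L1" unfolding L1_def by (simp add: sum_distrib_left case_prod_beta)
      finally show ?thesis .
    qed
    have Ff: "s * L2 \<le> S2"
    proof -
      have "s * L2 = (\<Sum>(p,q)\<in>D2. s * (q - p))" unfolding L2_def by (simp add: sum_distrib_left case_prod_beta)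
      also have "\<dots> \<le> S2"
        unfolding S2_def using D2(2) by (intro sum_mono) (auto simp: case_prod_beta less_imp_le)
      finally show ?thesis .
    qed
    have mL2: "m \<le> L2 + 2 * \<epsilon>" using A B T1(3) T2(3) by linarith
    have L1m: "L1 < m + 2 * \<epsilon>" using C mU by linarith
    have gapL: "L1 - L2 < \<delta>" using mL2 L1m \<epsilon>d(1) d by linarith
    have D1b: "a \<le> p \<and> p < q \<and> q \<le> b" if "(p,q) \<in> D1" for p q
    proof -
      have "p < q" "{p..q} \<subseteq> U" using D1(2)[OF that] by auto
      then have "p \<in> U" "q \<in> U" by auto
      then show ?thesis using \<open>p < q\<close> unfolding U_def by auto
    qed
    have D2in: "p < q \<and> (\<exists>p' q'. (p',q') \<in> D1 \<and> p' \<le> p \<and> q \<le> q')" if "(p,q) \<in> D2" for p q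
      using D2(2)[OF that] by blast
    have Gg: "\<bar>S1 - S2\<bar> < e'"
      unfolding S1_def S2_def
      using G[OF D1(1) D2(1) D1b D1(3) D2(3) D2in] gapL unfolding L1_def L2_def by blast
    have h1: "s * L2 \<le> r * L1 + e'" using Ee Ff Gg by linarith
    have h2: "r * (L1 - L2) \<le> \<bar>r\<bar> * (4 * \<epsilon>)"
    proof -
      have "r * (L1 - L2) \<le> \<bar>r\<bar> * (L1 - L2)" using Dd by (intro mult_right_mono) auto
      also have "\<dots> \<le> \<bar>r\<bar> * (4 * \<epsilon>)" using mL2 L1m by (intro mult_left_mono) auto
      finally show ?thesis .
    qed
    have h3: "(s - r) * (m - 2 * \<epsilon>) \<le> (s - r) * L2" using mL2 rs by (intro mult_left_mono) auto
    have h4: "\<epsilon> * K \<le> c * K" using \<epsilon>d(2) K by (intro mult_right_mono) auto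
    have h5: "(s - r) * m \<le> e' + \<epsilon> * K"
    proof -
      have e1: "(s - r) * (m - 2 * \<epsilon>) = (s - r) * m - 2 * (s - r) * \<epsilon>" by (simp add: algebra_simps)
      have e2: "(s - r) * L2 = s * L2 - r * L2" by (simp add: algebra_simps)
      have e3: "r * (L1 - L2) = r * L1 - r * L2" by (simp add: algebra_simps)
      have e4: "\<epsilon> * K = 4 * (\<bar>r\<bar> * \<epsilon>) + 2 * (s - r) * \<epsilon> + \<epsilon>" unfolding K_def by (simp add: algebra_simps)
      have e5: "\<bar>r\<bar> * (4 * \<epsilon>) = 4 * (\<bar>r\<bar> * \<epsilon>)" by simp
      show ?thesis using h1 h2 h3 e1 e2 e3 e4 e5 \<epsilon> by linarith
    qed
    have "(s - r) * m \<le> (s - r) * z" using h5 h4 cK unfolding e'_def by linarith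
    then show "m \<le> 0 + z" using rs by simp
  qed
  then have "om ?E \<le> 0" unfolding m_def .
  then show ?thesis by (rule om_negligible[OF EV V0l])
qed

lemma deriv_from_bounds:
  fixes F :: "real \<Rightarrow> real" and x :: real
  assumes bnd: "\<exists>M>0. \<exists>d>0. \<forall>p q. p \<le> x \<and> x \<le> q \<and> p < q \<and> q - p < d \<longrightarrow> \<bar>F q - F p\<bar> \<le> M * (q - p)"
    and osc: "\<And>r s. r \<in> \<rat> \<Longrightarrow> s \<in> \<rat> \<Longrightarrow> r < s \<Longrightarrow>
      (\<exists>d>0. \<forall>p q. p \<le> x \<and> x \<le> q \<and> p < q \<and> q - p < d \<longrightarrow> r * (q - p) \<le> F q - F p) \<or>
      (\<exists>d>0. \<forall>p q. p \<le> x \<and> x \<le> q \<and> p < q \<and> q - p < d \<longrightarrow> F q - F p \<le> s * (q - p))"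
  shows "\<exists>L. (F has_real_derivative L) (at x)"
proof -
  obtain M d0 where M: "M > 0" and d0: "d0 > 0"
    and MB: "\<And>p q. p \<le> x \<Longrightarrow> x \<le> q \<Longrightarrow> p < q \<Longrightarrow> q - p < d0 \<Longrightarrow> \<bar>F q - F p\<bar> \<le> M * (q - p)"
    using bnd by blast
  define R where "R = {r \<in> \<rat>. \<exists>d>0. \<forall>p q. p \<le> x \<and> x \<le> q \<and> p < q \<and> q - p < d \<longrightarrow> r * (q - p) \<le> F q - F p}"
  have Rne: "- of_int \<lceil>M\<rceil> \<in> R"
  proof -
    have "(- of_int \<lceil>M\<rceil>) * (q - p) \<le> F q - F p" if "p \<le> x" "x \<le> q" "p < q" "q - p < d0" for p q
    proof -
      have "(- of_int \<lceil>M\<rceil>) * (q - p) \<le> (- M) * (q - p)"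
        using that by (intro mult_right_mono) (auto simp: le_of_int_ceiling)
      also have "\<dots> \<le> F q - F p" using MB[OF that] by (simp add: abs_le_iff)
      finally show ?thesis .
    qed
    then show ?thesis unfolding R_def using d0 by (auto intro!: exI[of _ d0])
  qed
  have Rbd: "r \<le> M" if rR: "r \<in> R" for r
  proof -
    obtain d1 where d1: "d1 > 0" and H: "\<And>p q. p \<le> x \<Longrightarrow> x \<le> q \<Longrightarrow> p < q \<Longrightarrow> q - p < d1 \<Longrightarrow> r * (q - p) \<le> F q - F p"
      using rR unfolding R_def by blast
    define h where "h = min d0 d1 / 2"
    have h: "h > 0" "h < d0" "h < d1" unfolding h_def using d0 d1 by auto
    have "r * h \<le> F (x + h) - F x" using H[of x "x + h"] h by simp
    also have "\<dots> \<le> M * h" using MB[of x "x + h"] h by (simp add: abs_le_iff)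
    finally show "r \<le> M" using h(1) by simp
  qed
  have bdd: "bdd_above R" using Rbd by (intro bdd_aboveI) auto
  have Rne': "R \<noteq> {}" using Rne by blast
  define L where "L = Sup R"
  have lower: "\<exists>d>0. \<forall>p q. p \<le> x \<and> x \<le> q \<and> p < q \<and> q - p < d \<longrightarrow> (L - e) * (q - p) < F q - F p"
    if e: "e > 0" for e
  proof -
    have "L - e < Sup R" unfolding L_def using e by simp
    then obtain r where r: "r \<in> R" "L - e < r" using less_cSup_iff[OF Rne' bdd] by blast
    then obtain d1 where d1: "d1 > 0" and H: "\<And>p q. p \<le> x \<Longrightarrow> x \<le> q \<Longrightarrow> p < q \<Longrightarrow> q - p < d1 \<Longrightarrow> r * (q - p) \<le> F q - F p"
      unfolding R_def by blast
    show ?thesis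
    proof (intro exI[of _ d1] conjI allI impI d1)
      fix p q assume pq: "p \<le> x \<and> x \<le> q \<and> p < q \<and> q - p < d1"
      have "(L - e) * (q - p) < r * (q - p)" using r(2) pq by (intro mult_strict_right_mono) auto
      also have "\<dots> \<le> F q - F p" using H pq by blast
      finally show "(L - e) * (q - p) < F q - F p" .
    qed
  qed
  have upper: "\<exists>d>0. \<forall>p q. p \<le> x \<and> x \<le> q \<and> p < q \<and> q - p < d \<longrightarrow> F q - F p < (L + e) * (q - p)"
    if e: "e > 0" for e
  proof -
    obtain r where r: "r \<in> \<rat>" "L < r" "r < L + e/2" using Rats_dense_in_real[of L "L + e/2"] e by auto
    obtain s where s: "s \<in> \<rat>" "r < s" "s < L + e" using Rats_dense_in_real[of r "L + e"] r e by auto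
    have "r \<notin> R"
    proof
      assume "r \<in> R"
      then have "r \<le> L" unfolding L_def by (rule cSup_upper[OF _ bdd])
      then show False using r(2) by simp
    qed
    then have "\<not> (\<exists>d>0. \<forall>p q. p \<le> x \<and> x \<le> q \<and> p < q \<and> q - p < d \<longrightarrow> r * (q - p) \<le> F q - F p)"
      using r(1) unfolding R_def by blast
    then obtain d1 where d1: "d1 > 0" and H: "\<And>p q. p \<le> x \<Longrightarrow> x \<le> q \<Longrightarrow> p < q \<Longrightarrow> q - p < d1 \<Longrightarrow> F q - F p \<le> s * (q - p)"
      using osc[OF r(1) s(1) s(2)] by blast
    show ?thesis
    proof (intro exI[of _ d1] conjI allI impI d1)
      fix p q assume pq: "p \<le> x \<and> x \<le> q \<and> p < q \<and> q - p < d1"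
      have "F q - F p \<le> s * (q - p)" using H pq by blast
      also have "\<dots> < (L + e) * (q - p)" using s(3) pq by (intro mult_strict_right_mono) auto
      finally show "F q - F p < (L + e) * (q - p)" .
    qed
  qed
  have "(F has_real_derivative L) (at x)"
    unfolding has_field_derivative_iff LIM_eq
  proof (intro allI impI)
    fix e :: real assume e: "e > 0"
    obtain d1 where d1: "d1 > 0" and H1: "\<And>p q. p \<le> x \<Longrightarrow> x \<le> q \<Longrightarrow> p < q \<Longrightarrow> q - p < d1 \<Longrightarrow> (L - e) * (q - p) < F q - F p"
      using lower[OF e] by blast
    obtain d2 where d2: "d2 > 0" and H2: "\<And>p q. p \<le> x \<Longrightarrow> x \<le> q \<Longrightarrow> p < q \<Longrightarrow> q - p < d2 \<Longrightarrow> F q - F p < (L + e) * (q - p)"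
      using upper[OF e] by blast
    show "\<exists>s>0. \<forall>y. y \<noteq> x \<and> norm (y - x) < s \<longrightarrow> norm ((F y - F x) / (y - x) - L) < e"
    proof (intro exI[of _ "min d1 d2"] conjI allI impI)
      show "min d1 d2 > 0" using d1 d2 by simp
      fix y assume y: "y \<noteq> x \<and> norm (y - x) < min d1 d2"
      show "norm ((F y - F x) / (y - x) - L) < e"
      proof (cases "x < y")
        case True
        have h: "y - x > 0" "y - x < d1" "y - x < d2" using True y by auto
        have a1: "(L - e) * (y - x) < F y - F x" using H1[of x y] h by simp
        have a2: "F y - F x < (L + e) * (y - x)" using H2[of x y] h by simp
        have "L - e < (F y - F x) / (y - x)" using a1 h(1) by (simp add: pos_less_divide_eq)
        moreover have "(F y - F x) / (y - x) < L + e" using a2 h(1) by (simp add: pos_divide_less_eq)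
        ultimately show ?thesis by (simp add: abs_less_iff)
      next
        case False
        then have yx: "y < x" using y by auto
        have h: "x - y > 0" "x - y < d1" "x - y < d2" using yx y by auto
        have a1: "(L - e) * (x - y) < F x - F y" using H1[of y x] h by simp
        have a2: "F x - F y < (L + e) * (x - y)" using H2[of y x] h by simp
        have q: "(F y - F x) / (y - x) = (F x - F y) / (x - y)"
          by (metis minus_diff_eq minus_divide_divide)
        have "L - e < (F x - F y) / (x - y)" using a1 h(1) by (simp add: pos_less_divide_eq)
        moreover have "(F x - F y) / (x - y) < L + e" using a2 h(1) by (simp add: pos_divide_less_eq)
        ultimately show ?thesis using q by (simp add: abs_less_iff)
      qed
    qed
  qed
  then show ?thesis by blast
qed

lemma ac_deriv_ae:
  fixes F :: "real \<Rightarrow> real"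
  assumes ac: "abs_continuous_on a b F"
  shows "negligible {x \<in> {a<..<b}. \<not> (\<exists>L. (F has_real_derivative L) (at x))}"
proof -
  define UNB where "UNB = {x \<in> {a<..<b}. \<forall>M>0. \<forall>d>0. \<exists>p q. p \<le> x \<and> x \<le> q \<and> p < q \<and> q - p < d \<and> M * (q - p) < \<bar>F q - F p\<bar>}"
  define ROY where "ROY r s = {x \<in> {a<..<b}. (\<forall>d>0. \<exists>p q. p \<le> x \<and> x \<le> q \<and> p < q \<and> q - p < d \<and> F q - F p < r * (q - p))
            \<and> (\<forall>d>0. \<exists>p q. p \<le> x \<and> x \<le> q \<and> p < q \<and> q - p < d \<and> s * (q - p) < F q - F p)}" for r s
  define RS where "RS = (\<lambda>(r,s). ROY r s) ` {(r,s). r \<in> \<rat> \<and> s \<in> \<rat> \<and> r < s}"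
  have n1: "negligible UNB" unfolding UNB_def by (rule unb_negligible[OF ac])
  have cRS: "countable RS"
  proof -
    have "{(r,s). r \<in> \<rat> \<and> s \<in> \<rat> \<and> r < s} \<subseteq> \<rat> \<times> \<rat>" by blast
    moreover have "countable (\<rat> \<times> (\<rat>::real set))" by (intro countable_SIGMA countable_rat)
    ultimately have "countable {(r,s). r \<in> \<rat> \<and> s \<in> (\<rat>::real set) \<and> r < s}" by (rule countable_subset)
    then show ?thesis unfolding RS_def by simp
  qed
  have n2: "negligible (\<Union>RS)"
  proof (rule negligible_countable_Union[OF cRS])
    fix S assume "S \<in> RS"
    then obtain r s where "r < s" "S = ROY r s" unfolding RS_def by blast
    then show "negligible S" unfolding ROY_def using roy_negligible[OF ac] by presburger
  qed
  have sub: "{x \<in> {a<..<b}. \<not> (\<exists>L. (F has_real_derivative L) (at x))} \<subseteq> UNB \<union> \<Union>RS"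
  proof
    fix x assume x: "x \<in> {x \<in> {a<..<b}. \<not> (\<exists>L. (F has_real_derivative L) (at x))}"
    show "x \<in> UNB \<union> \<Union>RS"
    proof (rule ccontr)
      assume nx: "x \<notin> UNB \<union> \<Union>RS"
      have xab: "x \<in> {a<..<b}" using x by blast
      have bnd: "\<exists>M>0. \<exists>d>0. \<forall>p q. p \<le> x \<and> x \<le> q \<and> p < q \<and> q - p < d \<longrightarrow> \<bar>F q - F p\<bar> \<le> M * (q - p)"
      proof -
        have "x \<notin> UNB" using nx by blast
        then have "\<not> (\<forall>M>0. \<forall>d>0. \<exists>p q. p \<le> x \<and> x \<le> q \<and> p < q \<and> q - p < d \<and> M * (q - p) < \<bar>F q - F p\<bar>)"
          using xab unfolding UNB_def by blast
        then show ?thesis by (meson not_less)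
      qed
      have osc: "(\<exists>d>0. \<forall>p q. p \<le> x \<and> x \<le> q \<and> p < q \<and> q - p < d \<longrightarrow> r * (q - p) \<le> F q - F p) \<or>
          (\<exists>d>0. \<forall>p q. p \<le> x \<and> x \<le> q \<and> p < q \<and> q - p < d \<longrightarrow> F q - F p \<le> s * (q - p))"
        if rs: "r \<in> \<rat>" "s \<in> \<rat>" "r < s" for r s
      proof -
        have "ROY r s \<in> RS" unfolding RS_def using rs by blast
        then have "x \<notin> ROY r s" using nx by blast
        then have "\<not> ((\<forall>d>0. \<exists>p q. p \<le> x \<and> x \<le> q \<and> p < q \<and> q - p < d \<and> F q - F p < r * (q - p))
            \<and> (\<forall>d>0. \<exists>p q. p \<le> x \<and> x \<le> q \<and> p < q \<and> q - p < d \<and> s * (q - p) < F q - F p))"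
          using xab unfolding ROY_def by blast
        then show ?thesis by (meson not_less)
      qed
      have "\<exists>L. (F has_real_derivative L) (at x)" by (rule deriv_from_bounds[OF bnd osc])
      then show False using x by blast
    qed
  qed
  show ?thesis by (rule negligible_subset[OF _ sub]) (rule negligible_Un[OF n1 n2])
qed

lemma dT_eq:
  assumes "(G has_real_derivative L) (at t)" "t \<in> {0<..<T}"
  shows "dT T G t = L"
proof -
  have "at t within {0..T} = at t" using assms(2) by (intro at_within_interior) auto
  then have eq: "(G has_real_derivative d) (at t within {0..T}) \<longleftrightarrow> (G has_real_derivative d) (at t)" for d
    by simp
  show ?thesis unfolding dT_def eq
  proof (rule the_equality)
    show "(G has_real_derivative L) (at t)" by (rule assms(1))
    fix d assume "(G has_real_derivative d) (at t)"
    then show "d = L" using DERIV_unique assms(1) by blast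
  qed
qed

lemma om_meas: "V \<in> lmeasurable \<Longrightarrow> om V = measure lebesgue V"
proof -
  assume V: "V \<in> lmeasurable"
  have "om V \<le> measure lebesgue V" by (rule om_le[OF V order_refl])
  moreover have "measure lebesgue V \<le> om V"
    unfolding om_def
  proof (rule cInf_greatest)
    show "measure lebesgue ` {T. T \<in> lmeasurable \<and> V \<subseteq> T} \<noteq> {}" using V by blast
    fix x assume "x \<in> measure lebesgue ` {T. T \<in> lmeasurable \<and> V \<subseteq> T}"
    then obtain T where T: "T \<in> lmeasurable" "V \<subseteq> T" "x = measure lebesgue T" by blast
    have "measure lebesgue V \<le> measure lebesgue T"
      by (rule measure_mono_fmeasurable[OF T(2) fmeasurableD[OF V] T(1)])
    then show "measure lebesgue V \<le> x" using T(3) by simp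
  qed
  ultimately show ?thesis by (rule antisym)
qed

lemma mono_from_deriv:
  fixes g :: "real \<Rightarrow> real"
  assumes ac: "abs_continuous_on p q g" and pq: "p < q" and c: "c > 0"
    and ae: "AE t in lebesgue. t \<in> {p<..<q} \<longrightarrow> (\<exists>D. (g has_real_derivative D) (at t) \<and> c \<le> D)"
  shows "g p < g q"
proof -
  obtain N where N: "{t \<in> space lebesgue. \<not> (t \<in> {p<..<q} \<longrightarrow> (\<exists>D. (g has_real_derivative D) (at t) \<and> c \<le> D))} \<subseteq> N"
    "N \<in> null_sets lebesgue"
  proof -
    from ae obtain N where a: "{t \<in> space lebesgue. \<not> (t \<in> {p<..<q} \<longrightarrow> (\<exists>D. (g has_real_derivative D) (at t) \<and> c \<le> D))} \<subseteq> N"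
      and b: "emeasure lebesgue N = 0" and cc: "N \<in> sets lebesgue" by (rule AE_E)
    have "N \<in> null_sets lebesgue" using b cc by (simp add: null_sets_def)
    then show thesis by (rule that[OF a])
  qed
  have Nl: "N \<in> lmeasurable" using N(2) by (simp add: fmeasurableI_null_sets)
  have mN: "measure lebesgue N = 0" using N(2) by (simp add: measure_eq_0_null_sets)
  define V where "V = {p<..<q}"
  define E where "E = V - N"
  have Vo: "open V" and Vb: "bounded V" unfolding V_def by auto
  have Vl: "V \<in> lmeasurable" unfolding V_def by simp
  have EV: "E \<subseteq> V" unfolding E_def by blast
  have omE: "q - p \<le> om E"
  proof -
    have "om V \<le> om (V \<inter> (- N)) + measure lebesgue N"
      by (rule om_split[OF order_refl Vl _ Nl]) blast
    moreover have "om V = q - p" unfolding V_def using pq by (simp add: om_meas)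
    moreover have "V \<inter> (- N) = E" unfolding E_def by blast
    ultimately show ?thesis using mN by simp
  qed
  have good: "\<exists>D. (g has_real_derivative D) (at x) \<and> c \<le> D" if "x \<in> E" for x
    using that N(1) unfolding E_def V_def by auto
  define e' where "e' = c * (q - p) / 4"
  have e': "e' > 0" unfolding e'_def using c pq by simp
  obtain \<delta> where d: "\<delta> > 0" and G: "\<And>D1 D2. finite D1 \<Longrightarrow> finite D2 \<Longrightarrow>
      (\<And>a b. (a,b) \<in> D1 \<Longrightarrow> p \<le> a \<and> a < b \<and> b \<le> q) \<Longrightarrow>
      (\<And>a b a' b'. (a,b) \<in> D1 \<Longrightarrow> (a',b') \<in> D1 \<Longrightarrow> (a,b) \<noteq> (a',b') \<Longrightarrow> b < a' \<or> b' < a) \<Longrightarrow>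
      (\<And>a b a' b'. (a,b) \<in> D2 \<Longrightarrow> (a',b') \<in> D2 \<Longrightarrow> (a,b) \<noteq> (a',b') \<Longrightarrow> b < a' \<or> b' < a) \<Longrightarrow>
      (\<And>a b. (a,b) \<in> D2 \<Longrightarrow> a < b \<and> (\<exists>a' b'. (a',b') \<in> D1 \<and> a' \<le> a \<and> b \<le> b')) \<Longrightarrow>
      (\<Sum>(a,b)\<in>D1. b - a) - (\<Sum>(a,b)\<in>D2. b - a) < \<delta> \<Longrightarrow>
      \<bar>(\<Sum>(a,b)\<in>D1. g b - g a) - (\<Sum>(a,b)\<in>D2. g b - g a)\<bar> < e'"
    using gap[OF ac e'] by blast
  define \<eta> where "\<eta> = min (\<delta>/2) ((q - p)/2)"
  have \<eta>: "\<eta> > 0" "\<eta> < \<delta>" "\<eta> \<le> (q - p)/2" unfolding \<eta>_def using d pq by (auto simp: min_def)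
  have Hyp: "\<exists>a b. a \<le> x \<and> x \<le> b \<and> a < b \<and> b - a < dd \<and> c/2 * (b - a) \<le> g b - g a"
    if x: "x \<in> E" and dd: "dd > 0" for x dd
  proof -
    obtain D where D: "(g has_real_derivative D) (at x)" "c \<le> D" using good[OF x] by blast
    have "D - c/2 > 0" using D(2) c by simp
    then obtain s where s: "s > 0" and S: "\<And>y. y \<noteq> x \<and> norm (y - x) < s \<Longrightarrow> norm ((g y - g x) / (y - x) - D) < D - c/2"
      using D(1) unfolding has_field_derivative_iff LIM_eq by blast
    define h where "h = min s dd / 2"
    have h: "h > 0" "h < s" "h < dd" unfolding h_def using s dd by auto
    have "norm ((g (x + h) - g x) / (x + h - x) - D) < D - c/2" using S[of "x + h"] h by simp
    then have "c/2 < (g (x + h) - g x) / h" by (simp add: abs_less_iff)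
    then have "c/2 * h < g (x + h) - g x" using h(1) by (simp add: pos_less_divide_eq)
    then show ?thesis using h by (intro exI[of _ x] exI[of _ "x + h"]) auto
  qed
  obtain D T where D: "finite D" "\<And>a b. (a,b) \<in> D \<Longrightarrow> a < b \<and> {a..b} \<subseteq> V \<and> c/2 * (b - a) \<le> g b - g a"
    "\<And>a b a' b'. (a,b) \<in> D \<Longrightarrow> (a',b') \<in> D \<Longrightarrow> (a,b) \<noteq> (a',b') \<Longrightarrow> b < a' \<or> b' < a"
    and T: "T \<in> lmeasurable" "E - (\<Union>(a,b)\<in>D. {a<..<b}) \<subseteq> T" "measure lebesgue T \<le> \<eta>"
    using vit[OF Vo Vb EV Hyp \<eta>(1)] by blast
  define LD where "LD = (\<Sum>(a,b)\<in>D. b - a)"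
  define SD where "SD = (\<Sum>(a,b)\<in>D. g b - g a)"
  have Dlt: "\<And>a b. (a,b) \<in> D \<Longrightarrow> a < b" using D(2) by blast
  have "om E \<le> LD + measure lebesgue T"
    unfolding LD_def by (rule om_cover[OF D(1) Dlt EV Vl T(2) T(1)])
  then have LDb: "q - p - \<eta> \<le> LD" using omE T(3) by linarith
  have SDb: "c/2 * LD \<le> SD"
  proof -
    have "c/2 * LD = (\<Sum>(a,b)\<in>D. c/2 * (b - a))" unfolding LD_def by (simp add: sum_distrib_left case_prod_beta)
    also have "\<dots> \<le> SD" unfolding SD_def using D(2) by (intro sum_mono) (auto simp: case_prod_beta)
    finally show ?thesis .
  qed
  have D1b: "p \<le> a \<and> a < b \<and> b \<le> q" if "(a,b) \<in> {(p,q)}" for a b using that pq by auto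
  have D1d: "b < a' \<or> b' < a" if "(a,b) \<in> {(p,q)}" "(a',b') \<in> {(p,q)}" "(a,b) \<noteq> (a',b')" for a b a' b'
    using that by auto
  have D2in: "a < b \<and> (\<exists>a' b'. (a',b') \<in> {(p,q)} \<and> a' \<le> a \<and> b \<le> b')" if "(a,b) \<in> D" for a b
  proof -
    have "a < b" "{a..b} \<subseteq> V" using D(2)[OF that] by auto
    have ab: "a \<in> {a..b}" "b \<in> {a..b}" using \<open>a < b\<close> by auto
    have "a \<in> V" "b \<in> V" using ab \<open>{a..b} \<subseteq> V\<close> by blast+
    then have "p < a" "b < q" unfolding V_def by auto
    then show ?thesis using \<open>a < b\<close> by auto
  qed
  have gl: "(\<Sum>(a,b)\<in>{(p,q)}. b - a) - LD < \<delta>" using LDb \<eta> unfolding LD_def by simp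
  have "\<bar>(\<Sum>(a,b)\<in>{(p,q)}. g b - g a) - SD\<bar> < e'"
    unfolding SD_def by (rule G[OF _ D(1) D1b D1d D(3) D2in]) (use gl in \<open>auto simp: LD_def\<close>)
  then have "\<bar>(g q - g p) - SD\<bar> < e'" by simp
  moreover have "c/2 * (q - p - \<eta>) \<le> c/2 * LD" using LDb c by (intro mult_left_mono) auto
  moreover have "c/2 * ((q - p)/2) \<le> c/2 * (q - p - \<eta>)" using \<eta>(3) c by (intro mult_left_mono) auto
  moreover have "c/2 * ((q - p)/2) = e'" unfolding e'_def by simp
  ultimately show ?thesis using SDb by (simp add: abs_less_iff)
qed

lemma at_Icc_nonbot:
  fixes t T :: real
  assumes "T > 0" "t \<in> {0..T}"
  shows "at t within {0..T} \<noteq> bot"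
proof (cases "t = 0")
  case True
  then show ?thesis using assms(1) by (simp add: at_within_Icc_at_right)
next
  case False
  show ?thesis
  proof (cases "t = T")
    case True
    then show ?thesis using assms(1) by (simp add: at_within_Icc_at_left)
  next
    case False
    then have "t \<in> interior {0..T}" using assms \<open>t \<noteq> 0\<close> by auto
    then have "at t within {0..T} = at t" by (rule at_within_interior)
    then show ?thesis by simp
  qed
qed

lemma dT_deriv:
  assumes C: "C1T T u" and T: "T > 0" and t: "t \<in> {0..T}"
  shows "(u has_real_derivative dT T u t) (at t within {0..T})"
proof -
  have "u differentiable (at t within {0..T})" using C t unfolding C1T_def by blast
  then obtain D where D: "(u has_real_derivative D) (at t within {0..T})"
    unfolding real_differentiable_def by blast
  have "dT T u t = D" unfolding dT_def
  proof (rule the_equality)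
    show "(u has_real_derivative D) (at t within {0..T})" by (rule D)
    fix d assume "(u has_real_derivative d) (at t within {0..T})"
    then show "d = D" using has_field_derivative_unique[OF _ D at_Icc_nonbot[OF T t]] by blast
  qed
  then show ?thesis using D by simp
qed

lemma deriv_interior:
  assumes "(u has_real_derivative D) (at t within {0..T})" "t \<in> {0<..<T}"
  shows "(u has_real_derivative D) (at t)"
proof -
  have "at t within {0..T} = at t" using assms(2) by (intro at_within_interior) auto
  then show ?thesis using assms(1) by simp
qed

lemma max_deriv_left:
  fixes w :: "real \<Rightarrow> real"
  assumes d: "(w has_real_derivative l) (at a within {a..c})" and ac: "a < c"
    and mx: "\<And>y. y \<in> {a..c} \<Longrightarrow> w y \<le> w a"
  shows "l \<le> 0"
proof -
  have lim: "((\<lambda>y. (w y - w a) / (y - a)) \<longlongrightarrow> l) (at_right a)"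
    using d unfolding has_field_derivative_iff at_within_Icc_at_right[OF ac] .
  have ev: "eventually (\<lambda>y. (w y - w a) / (y - a) \<le> 0) (at_right a)"
    unfolding eventually_at_right_field
  proof (intro exI[of _ c] conjI allI impI)
    show "c > a" using ac .
    fix y assume "y > a" "y < c"
    then have "w y - w a \<le> 0" using mx[of y] by auto
    then show "(w y - w a) / (y - a) \<le> 0" using \<open>y > a\<close> by (simp add: divide_nonpos_pos)
  qed
  show ?thesis by (rule tendsto_upperbound[OF lim ev]) simp
qed

lemma max_deriv_right:
  fixes w :: "real \<Rightarrow> real"
  assumes d: "(w has_real_derivative l) (at c within {a..c})" and ac: "a < c"
    and mx: "\<And>y. y \<in> {a..c} \<Longrightarrow> w y \<le> w c"
  shows "l \<ge> 0"
proof -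
  have lim: "((\<lambda>y. (w y - w c) / (y - c)) \<longlongrightarrow> l) (at_left c)"
    using d unfolding has_field_derivative_iff at_within_Icc_at_left[OF ac] .
  have ev: "eventually (\<lambda>y. 0 \<le> (w y - w c) / (y - c)) (at_left c)"
    unfolding eventually_at_left_field
  proof (intro exI[of _ a] conjI allI impI)
    show "a < c" using ac .
    fix y assume "y > a" "y < c"
    then have "w y - w c \<le> 0" using mx[of y] by auto
    then show "0 \<le> (w y - w c) / (y - c)" using \<open>y < c\<close> by (simp add: divide_nonpos_neg)
  qed
  show ?thesis by (rule tendsto_lowerbound[OF lim ev]) simp
qed

lemma core:
  fixes T b :: real and \<phi> f :: "real \<Rightarrow> real" and h :: "real \<Rightarrow> real \<Rightarrow> real"
    and \<beta> u :: "real \<Rightarrow> real" and t0 :: real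
  assumes T: "T > 0"
    and phi_mono: "strict_mono \<phi>"
    and f_cont: "continuous_on UNIV f"
    and A0: "\<forall>t0\<in>{0..T}. \<forall>u0. \<forall>\<epsilon>>0. \<exists>\<delta>>0.
               (AE t in lebesgue. t \<in> {0..T} \<longrightarrow>
                  (\<forall>u. \<bar>t - t0\<bar> < \<delta> \<and> \<bar>u - u0\<bar> < \<delta> \<longrightarrow> \<bar>h t u - h t u0\<bar> < \<epsilon>))"
    and b: "b > 0"
    and beta_D: "DD T \<phi> \<beta>"
    and beta_ineq: "AE t in lebesgue. t \<in> {0..T} \<longrightarrow> Lop T \<phi> f h \<beta> t \<le> - b"
    and uD: "DD T \<phi> u" and uL: "AE t in lebesgue. t \<in> {0..T} \<longrightarrow> Lop T \<phi> f h u t = 0"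
    and le: "\<forall>t\<in>{0..T}. u t \<le> \<beta> t" and t0: "0 \<le> t0" "t0 < T"
    and eq: "u t0 = \<beta> t0" and deq: "dT T u t0 = dT T \<beta> t0"
  shows False
proof -
  define u' where "u' = dT T u"
  define b' where "b' = dT T \<beta>"
  have Cu: "C1T T u" and ACu: "abs_continuous_on 0 T (\<lambda>s. \<phi> (u' s))"
    using uD unfolding DD_def u'_def by auto
  have Cb: "C1T T \<beta>" and ACb: "abs_continuous_on 0 T (\<lambda>s. \<phi> (b' s))"
    using beta_D unfolding DD_def b'_def by auto
  have du: "\<And>t. t \<in> {0..T} \<Longrightarrow> (u has_real_derivative u' t) (at t within {0..T})"
    unfolding u'_def by (rule dT_deriv[OF Cu T])
  have db: "\<And>t. t \<in> {0..T} \<Longrightarrow> (\<beta> has_real_derivative b' t) (at t within {0..T})"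
    unfolding b'_def by (rule dT_deriv[OF Cb T])
  have cu: "continuous_on {0..T} u" by (rule DERIV_continuous_on[OF du])
  have cb: "continuous_on {0..T} \<beta>" by (rule DERIV_continuous_on[OF db])
  have cu': "continuous_on {0..T} u'" using Cu unfolding C1T_def u'_def by blast
  have cb': "continuous_on {0..T} b'" using Cb unfolding C1T_def b'_def by blast
  have t0T: "t0 \<in> {0..T}" using t0 by simp
  define u0 where "u0 = u t0"
  have b4: "b/4 > 0" using b by simp
  obtain \<delta>A where dA: "\<delta>A > 0" and HA: "AE t in lebesgue. t \<in> {0..T} \<longrightarrow>
                  (\<forall>v. \<bar>t - t0\<bar> < \<delta>A \<and> \<bar>v - u0\<bar> < \<delta>A \<longrightarrow> \<bar>h t v - h t u0\<bar> < b/4)"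
    using A0 t0T b4 by blast
  define k where "k t = f (u t) * u' t - f (\<beta> t) * b' t" for t
  have cfu: "continuous_on {0..T} (\<lambda>t. f (u t))"
    using continuous_on_compose2[OF f_cont cu] by simp
  have cfb: "continuous_on {0..T} (\<lambda>t. f (\<beta> t))"
    using continuous_on_compose2[OF f_cont cb] by simp
  have ck: "continuous_on {0..T} k" unfolding k_def
    by (intro continuous_on_diff continuous_on_mult cfu cfb cu' cb')
  have k0: "k t0 = 0" unfolding k_def using eq deq unfolding u'_def b'_def by simp
  obtain d1 where d1: "d1 > 0" and H1: "\<And>t. t \<in> {0..T} \<Longrightarrow> dist t t0 < d1 \<Longrightarrow> dist (u t) (u t0) < \<delta>A"
    using cu t0T dA unfolding continuous_on_iff by blast
  obtain d2 where d2: "d2 > 0" and H2: "\<And>t. t \<in> {0..T} \<Longrightarrow> dist t t0 < d2 \<Longrightarrow> dist (\<beta> t) (\<beta> t0) < \<delta>A"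
    using cb t0T dA unfolding continuous_on_iff by blast
  obtain d3 where d3: "d3 > 0" and H3: "\<And>t. t \<in> {0..T} \<Longrightarrow> dist t t0 < d3 \<Longrightarrow> dist (k t) (k t0) < b/4"
    using ck t0T b4 unfolding continuous_on_iff by blast
  define \<delta>1 where "\<delta>1 = min (T - t0) (min \<delta>A (min d1 (min d2 d3)) / 2)"
  have \<delta>1: "\<delta>1 > 0" "\<delta>1 \<le> T - t0" "\<delta>1 < \<delta>A" "\<delta>1 < d1" "\<delta>1 < d2" "\<delta>1 < d3"
    unfolding \<delta>1_def using t0 dA d1 d2 d3 by (auto simp: min_def)
  define t1 where "t1 = t0 + \<delta>1"
  have t1: "t0 < t1" "t1 \<le> T" unfolding t1_def using \<delta>1 by auto
  have near: "\<bar>t - t0\<bar> < \<delta>A \<and> \<bar>u t - u0\<bar> < \<delta>A \<and> \<bar>\<beta> t - u0\<bar> < \<delta>A \<and> \<bar>k t\<bar> < b/4"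
    if t: "t0 \<le> t" "t \<le> t1" for t
  proof -
    have tT: "t \<in> {0..T}" using t t0 t1 by auto
    have dt: "dist t t0 < d1" "dist t t0 < d2" "dist t t0 < d3" "\<bar>t - t0\<bar> < \<delta>A"
      using t \<delta>1 unfolding t1_def dist_real_def by auto
    have "\<bar>u t - u0\<bar> < \<delta>A" using H1[OF tT dt(1)] unfolding u0_def dist_real_def .
    moreover have "\<bar>\<beta> t - u0\<bar> < \<delta>A" using H2[OF tT dt(2)] eq unfolding u0_def dist_real_def by simp
    moreover have "\<bar>k t\<bar> < b/4" using H3[OF tT dt(3)] k0 unfolding dist_real_def by simp
    ultimately show ?thesis using dt(4) by blast
  qed
  have nu: "negligible {x \<in> {0<..<T}. \<not> (\<exists>L. ((\<lambda>s. \<phi> (u' s)) has_real_derivative L) (at x))}"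
    by (rule ac_deriv_ae[OF ACu])
  have nb: "negligible {x \<in> {0<..<T}. \<not> (\<exists>L. ((\<lambda>s. \<phi> (b' s)) has_real_derivative L) (at x))}"
    by (rule ac_deriv_ae[OF ACb])
  have AEu: "AE t in lebesgue. t \<notin> {x \<in> {0<..<T}. \<not> (\<exists>L. ((\<lambda>s. \<phi> (u' s)) has_real_derivative L) (at x))}"
    using nu by (intro AE_not_in) (simp add: negligible_iff_null_sets)
  have AEb: "AE t in lebesgue. t \<notin> {x \<in> {0<..<T}. \<not> (\<exists>L. ((\<lambda>s. \<phi> (b' s)) has_real_derivative L) (at x))}"
    using nb by (intro AE_not_in) (simp add: negligible_iff_null_sets)
  define g where "g s = \<phi> (u' s) - \<phi> (b' s)" for s
  have ACg: "abs_continuous_on 0 T g" unfolding g_def by (rule ac_diff[OF ACu ACb])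
  have g0: "g t0 = 0" unfolding g_def using deq unfolding u'_def b'_def by simp
  have pointwise: "\<exists>D. (g has_real_derivative D) (at t) \<and> b/4 \<le> D"
    if t: "t0 < t" "t < t1"
      and nbu: "t \<notin> {x \<in> {0<..<T}. \<not> (\<exists>L. ((\<lambda>s. \<phi> (u' s)) has_real_derivative L) (at x))}"
      and nbb: "t \<notin> {x \<in> {0<..<T}. \<not> (\<exists>L. ((\<lambda>s. \<phi> (b' s)) has_real_derivative L) (at x))}"
      and Lu0: "t \<in> {0..T} \<longrightarrow> Lop T \<phi> f h u t = 0"
      and Lb0: "t \<in> {0..T} \<longrightarrow> Lop T \<phi> f h \<beta> t \<le> - b"
      and hh: "t \<in> {0..T} \<longrightarrow> (\<forall>v. \<bar>t - t0\<bar> < \<delta>A \<and> \<bar>v - u0\<bar> < \<delta>A \<longrightarrow> \<bar>h t v - h t u0\<bar> < b/4)"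
    for t
  proof -
    have tI: "t \<in> {0<..<T}" using t t0 t1 by auto
    have tT: "t \<in> {0..T}" using tI by auto
    obtain Lu where Lu: "((\<lambda>s. \<phi> (u' s)) has_real_derivative Lu) (at t)" using nbu tI by blast
    obtain Lb where Lb: "((\<lambda>s. \<phi> (b' s)) has_real_derivative Lb) (at t)" using nbb tI by blast
    have dTu: "dT T (\<lambda>s. \<phi> (dT T u s)) t = Lu" using dT_eq[OF Lu tI] unfolding u'_def .
    have dTb: "dT T (\<lambda>s. \<phi> (dT T \<beta> s)) t = Lb" using dT_eq[OF Lb tI] unfolding b'_def .
    have e1: "Lu + f (u t) * u' t + h t (u t) = 0" using Lu0 tT dTu unfolding Lop_def u'_def by simp
    have e2: "Lb + f (\<beta> t) * b' t + h t (\<beta> t) \<le> - b" using Lb0 tT dTb unfolding Lop_def b'_def by simp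
    have nr: "\<bar>t - t0\<bar> < \<delta>A \<and> \<bar>u t - u0\<bar> < \<delta>A \<and> \<bar>\<beta> t - u0\<bar> < \<delta>A \<and> \<bar>k t\<bar> < b/4"
      using near[of t] t by simp
    have h1: "\<bar>h t (u t) - h t u0\<bar> < b/4" using hh tT nr by blast
    have h2: "\<bar>h t (\<beta> t) - h t u0\<bar> < b/4" using hh tT nr by blast
    have kt: "\<bar>f (u t) * u' t - f (\<beta> t) * b' t\<bar> < b/4" using nr unfolding k_def by simp
    have "b/4 \<le> Lu - Lb" using e1 e2 h1 h2 kt unfolding abs_less_iff by linarith
    moreover have "(g has_real_derivative Lu - Lb) (at t)" unfolding g_def by (rule DERIV_diff[OF Lu Lb])
    ultimately show ?thesis by blast
  qed
  have gpos: "g t0 < g s" if s: "t0 < s" "s \<le> t1" for s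
  proof (rule mono_from_deriv[OF ac_sub[OF ACg] s(1) b4])
    show "0 \<le> t0" using t0 by simp
    show "s \<le> T" using s t1 by simp
    show "AE t in lebesgue. t \<in> {t0<..<s} \<longrightarrow> (\<exists>D. (g has_real_derivative D) (at t) \<and> b/4 \<le> D)"
      using AEu AEb uL beta_ineq HA
    proof eventually_elim
      case (elim t)
      show ?case
      proof
        assume "t \<in> {t0<..<s}"
        then have "t0 < t" "t < t1" using s by auto
        then show "\<exists>D. (g has_real_derivative D) (at t) \<and> b/4 \<le> D"
          by (rule pointwise[OF _ _ elim(1) elim(2) elim(3) elim(4) elim(5)])
      qed
    qed
  qed
  have u'gt: "b' s < u' s" if s: "t0 < s" "s \<le> t1" for s
  proof (rule ccontr)
    assume "\<not> b' s < u' s"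
    then have "u' s \<le> b' s" by simp
    then have "\<phi> (u' s) \<le> \<phi> (b' s)" using phi_mono by (simp add: strict_mono_less_eq)
    then show False using gpos[OF s] g0 unfolding g_def by simp
  qed
  define w where "w x = u x - \<beta> x" for x
  have wdiff: "\<exists>y. (w has_real_derivative y) (at x) \<and> y > 0" if x: "t0 < x" "x < t1" for x
  proof -
    have xI: "x \<in> {0<..<T}" using x t0 t1 by auto
    then have xT: "x \<in> {0..T}" by auto
    have "(u has_real_derivative u' x) (at x)" by (rule deriv_interior[OF du[OF xT] xI])
    moreover have "(\<beta> has_real_derivative b' x) (at x)" by (rule deriv_interior[OF db[OF xT] xI])
    ultimately have "(w has_real_derivative u' x - b' x) (at x)" unfolding w_def by (rule DERIV_diff)
    moreover have "u' x - b' x > 0" using u'gt[of x] x by simp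
    ultimately show ?thesis by blast
  qed
  have cw: "continuous_on {t0..t1} w"
  proof -
    have "continuous_on {0..T} w" unfolding w_def by (intro continuous_on_diff cu cb)
    then show ?thesis by (rule continuous_on_subset) (use t0 t1 in auto)
  qed
  have "w t0 < w t1" by (rule DERIV_pos_imp_increasing_open[OF t1(1) wdiff cw])
  moreover have "w t0 = 0" unfolding w_def using eq by simp
  moreover have "w t1 \<le> 0" unfolding w_def using le t0 t1 by auto
  ultimately show False by simp
qed

theorem lemma2p2:
  fixes T b :: real and \<phi> f :: "real \<Rightarrow> real" and h :: "real \<Rightarrow> real \<Rightarrow> real"
    and \<beta> :: "real \<Rightarrow> real"
  assumes T: "T > 0"
    and phi_mono: "strict_mono \<phi>"
    and phi_homeo: "\<exists>\<psi>. homeomorphism UNIV UNIV \<phi> \<psi>"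
    and phi0: "\<phi> 0 = 0"
    and f_cont: "continuous_on UNIV f"
    and h_car: "caratheodory T h"
    and A0: "\<forall>t0\<in>{0..T}. \<forall>u0. \<forall>\<epsilon>>0. \<exists>\<delta>>0.
               (AE t in lebesgue. t \<in> {0..T} \<longrightarrow>
                  (\<forall>u. \<bar>t - t0\<bar> < \<delta> \<and> \<bar>u - u0\<bar> < \<delta> \<longrightarrow> \<bar>h t u - h t u0\<bar> < \<epsilon>))"
    and b: "b > 0"
    and beta_D: "DD T \<phi> \<beta>"
    and beta_ineq: "AE t in lebesgue. t \<in> {0..T} \<longrightarrow> Lop T \<phi> f h \<beta> t \<le> - b"
  shows "strict_upper_solution T \<phi> f h \<beta>"
proof -
  have Lop_lt: "AE t in lebesgue. t \<in> {0..T} \<longrightarrow> Lop T \<phi> f h \<beta> t < 0"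
  proof (rule AE_mp[OF beta_ineq])
    show "AE t in lebesgue. (t \<in> {0..T} \<longrightarrow> Lop T \<phi> f h \<beta> t \<le> - b) \<longrightarrow> (t \<in> {0..T} \<longrightarrow> Lop T \<phi> f h \<beta> t < 0)"
      using b by (intro AE_I2) auto
  qed
  have main: "u t < \<beta> t" if us: "periodic_solution T \<phi> f h u" and le: "\<forall>t\<in>{0..T}. u t \<le> \<beta> t"
    and t: "t \<in> {0..T}" for u t
  proof (rule ccontr)
    assume "\<not> u t < \<beta> t"
    then have eqt: "u t = \<beta> t" using le t by force
    have uD: "DD T \<phi> u" and uL: "AE t in lebesgue. t \<in> {0..T} \<longrightarrow> Lop T \<phi> f h u t = 0"
      using us unfolding periodic_solution_def by auto
    have Cu: "C1T T u" using uD unfolding DD_def by blast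
    have Cb: "C1T T \<beta>" using beta_D unfolding DD_def by blast
    have per: "u 0 = u T" "dT T u 0 = dT T u T" "\<beta> 0 = \<beta> T" "dT T \<beta> 0 = dT T \<beta> T"
      using Cu Cb unfolding C1T_def by auto
    define w where "w x = u x - \<beta> x" for x
    have dw: "(w has_real_derivative dT T u x - dT T \<beta> x) (at x within {0..T})" if "x \<in> {0..T}" for x
      unfolding w_def by (rule DERIV_diff[OF dT_deriv[OF Cu T that] dT_deriv[OF Cb T that]])
    have wle: "w y \<le> 0" if "y \<in> {0..T}" for y using le that unfolding w_def by auto
    note core' = core[OF T phi_mono f_cont A0 b beta_D beta_ineq uD uL le]
    show False
    proof (cases "t \<in> {0<..<T}")
      case True
      have "(w has_real_derivative dT T u t - dT T \<beta> t) (at t)"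
        by (rule deriv_interior[OF dw[OF t] True])
      moreover have "0 < min t (T - t)" using True by simp
      moreover have "\<forall>y. \<bar>t - y\<bar> < min t (T - t) \<longrightarrow> w y \<le> w t"
      proof (intro allI impI)
        fix y assume "\<bar>t - y\<bar> < min t (T - t)"
        then have "y \<in> {0..T}" by auto
        then show "w y \<le> w t" using wle eqt unfolding w_def by auto
      qed
      ultimately have "dT T u t - dT T \<beta> t = 0" by (rule DERIV_local_max)
      then have "dT T u t = dT T \<beta> t" by simp
      moreover have "0 \<le> t" "t < T" using True by auto
      ultimately show False using core'[of t] eqt by blast
    next
      case False
      then have "t = 0 \<or> t = T" using t by auto
      then have e0: "u 0 = \<beta> 0" using eqt per by auto
      have w0: "w 0 = 0" "w T = 0" unfolding w_def using e0 per by auto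
      have "dT T u 0 - dT T \<beta> 0 \<le> 0"
      proof (rule max_deriv_left[OF _ T])
        show "(w has_real_derivative dT T u 0 - dT T \<beta> 0) (at 0 within {0..T})" using dw[of 0] T by simp
        show "\<And>y. y \<in> {0..T} \<Longrightarrow> w y \<le> w 0" using wle w0 by simp
      qed
      moreover have "dT T u T - dT T \<beta> T \<ge> 0"
      proof (rule max_deriv_right[OF _ T])
        show "(w has_real_derivative dT T u T - dT T \<beta> T) (at T within {0..T})" using dw[of T] T by simp
        show "\<And>y. y \<in> {0..T} \<Longrightarrow> w y \<le> w T" using wle w0 by simp
      qed
      ultimately have "dT T u 0 = dT T \<beta> 0" using per by simp
      then show False using core'[of 0] e0 T by simp
    qed
  qed
  show ?thesis unfolding strict_upper_solution_def using beta_D Lop_lt main by blast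
qed

end
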